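(* Every safe and aperiodic program is terminating, i.e. $\llbracket\mathtt{P}\rrbracket$ is a total function for every $\mathtt{P}\in\mathrm{SAFE}\cap\mathrm{AP}$. Moreover, the inclusion $\llbracket\mathrm{SAFE}\cap\mathrm{AP}\rrbracket\subseteq\llbracket\mathrm{TERM}\rrbracket$ is strict: some terminating program computes a function not computed by any safe aperiodic program.
   Context: Words and values. $\Sigma\supseteq\{0,1\}$ is a finite alphabet and $\mathbb{W}=\Sigma^*$. Here $|w|$ is the length of $w$ and $1^n$ is the word of $n$ ones. A word counts as true iff it equals $1$. Write $v\unlhd w$ if $w=uvu'$ for some $u,u'$. Operators. Fix a countable set $\mathbb{V}$ of variables and a set $\mathbb{O}$ of operators. Each $\mathsf{op}$ has an arity and a total function $\llbracket\mathsf{op}\rrbracket:\mathbb{W}^{ar(\mathsf{op})}\to\mathbb{W}$. The set $\mathbb{O}$ includes $=,<,\le,0,+1,-1,\mathsf{not},\mathsf{and},\mathsf{or}$. Syntax. - Expressions: $e::=x\mid\mathsf{op}(\bar e)\mid\mathsf{declass}(e,e)$. - Statements: $s::=\mathtt{skip}\mid x:=e\mid s;s\mid\mathtt{if}(e)\{s\}\mathtt{else}\{s\}\mid\mathtt{while}(e)\{s\}\mid\mathtt{break}(e)$. - Programs: $\mathtt{prog}(\bar x)\{s\ \mathtt{return}\ y\}$, with $\mathrm{body}(\mathtt{P})=s$. Semantics. - Stores are total maps $\mathbb{V}\to\mathbb{W}$; the store $\mu_\emptyset$ is constantly $\epsilon$. - $\mathsf{declass}(e_1,e_2)$ evaluates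 to $1^{\min(|w_1|,|w_2|)}$, where $w_i$ is the value of $e_i$. Other expressions evaluate as usual. - Statements evaluate, big-step, to $(\square,\mu')$ with $\square\in\{\top,\bot\}$: - $\mathtt{break}(e)$ yields $\bot$ iff $e$ evaluates to $1$. - A sequence stops on $\bot$. - A conditional takes its first branch iff the guard is $1$. - $\mathtt{while}(e)\{s\}$ returns $(\top,\mu)$ if $e$ is not $1$, and otherwise evaluates $s;\mathtt{while}(e)\{s\}$ to some $(\square,\mu')$ and returns $(\top,\mu')$. - $\pi_c$ denotes the evaluation tree with root $c$; $\sqsubseteq$ and $\sqsubset$ denote the (strict) subtree relations. - $\llbracket\mathtt{P}\rrbracket(\bar w)=\mu'(y)$ when $(\mu_\emptyset[\bar x\leftarrow\bar w],s)$ evaluates to final store $\mu'$. - $\mathtt{P}$ is terminating ($\mathtt{P}\in\mathrm{TERM}$) if $\llbracket\mathtt{P}\rrbracket$ is total. Operator classes ($\mathsf{op}$ of arity $k$). - Neutral: $\llbracket\mathsf{op}\rrbracket$ has values in $\{0,1\}$, or for some $i$, $\llbracket\mathsf{op}\rrbracket(\bar w)\unlhd w_i$ for all $\bar w$. - Positive: $|\llbracket\mathsf{op}\rrbracket(\bar w)|\le\max_i|w_i|+c$ for some constant $c$. - Polynomial: $|\llbracket\mathsf{op}\rrbracket(\bar w)|\le P(\max_i|w_i|)$ for a polynomial $P$. - "Positive" means positive and not neutral; "polynomial" means polynomial and not positive. Typing judgments. Judgments are $\Gamma,\Delta\vdash^{\tau_{in}}_{\tau_{out}}b:\tau$ with levels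 in $\mathbb{N}$, where $\Gamma:\mathbb{V}\to\mathbb{N}$ and $\Delta(\mathsf{op}):\mathbb{N}^2\to\mathcal{P}(\mathbb{N}^{ar(\mathsf{op})+1})$. The rules are: - (VAR) If $\Gamma(x)=\tau$, then $x:\tau$. - (OP) If $\tau_1\to\dots\to\tau_{k+1}\in\Delta(\mathsf{op})(\tau_{in},\tau_{out})$ and $e_i:\tau_i$, then $\mathsf{op}(\bar e):\tau_{k+1}$. - (DCL) If $e_1:\tau_1$, $e_2:\tau_{out}$ and $\tau_1\le\tau\le\tau_{out}$, then $\mathsf{declass}(e_1,e_2):\tau$. - (SUB) Statements may be raised to a higher level. - (SKP) $\mathtt{skip}:0$. - (ASG) If $\Gamma(x)=\tau_1$, $e:\tau_2$, and ($\tau_{out}=0$ or $\tau_1\le\tau_2$), then $x:=e:\tau_1$. - (SEQ), (CND) All components have the same level $\tau$. - (WH) If $\vdash^{\tau}_{\tau_{out}}e:\tau$, $\vdash^{\tau}_{\tau_{out}}s:\tau$ and $1\le\tau\le\tau_{out}$, then $\vdash^{\tau_{in}}_{\tau_{out}}\mathtt{while}(e)\{s\}:\tau$. - (WI) If $\vdash^\tau_\tau e:\tau$, $\vdash^\tau_\tau s:\tau$ and $1\le\tau$, then $\vdash^0_0\mathtt{while}(e)\{s\}:\tau$. - (BRK) If $e:\tau$ and $\tau_{in}\le\tau$, then $\mathtt{break}(e):\tau_{in}$. Safe environments and programs. - $\Delta$ is safe if every operator in $dom(\Delta)$ is neutral, positive or polynomial and polytime computable, and each admissible tuple in $\Delta(\mathsf{op})(\tau_{in},\tau_{out})$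 satisfies: - if neutral, $\tau_{k+1}\le\min_i\tau_i$; - if positive, additionally $\tau_{k+1}<\tau_{in}$ or $\tau_{k+1}=0$; - if polynomial, $\tau_{out}=0$. - $\mathtt{P}\in\mathrm{SAFE}$ iff $\Gamma,\Delta\vdash^0_0\mathrm{body}(\mathtt{P}):\tau$ for some safe $\Delta$, some $\Gamma$ and some $\tau$. Aperiodicity. - $U(x)=\{x\}$, $U(\mathsf{op}(\bar e))=\bigcup U(e_i)$ and $U(\mathsf{declass}(e_1,e_2))=U(e_2)$. - $\mu\equiv_e\mu'$ iff $\mu,\mu'$ agree on $U(e)$. - $\mathtt{P}\in\mathrm{AP}$ iff for no store $\mu$ do there exist $\pi_{(\mu',s')}\sqsupset\pi_{(\mu'',s')}$, both subtrees of $\pi_{(\mu,\mathrm{body}(\mathtt{P}))}$, with $s'=\mathtt{while}(e)\{s''\}$ and $\mu'\equiv_e\mu''$. *)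

theory Defs
  imports "HOL-Library.Countable" "HOL-Computational_Algebra.Polynomial"
begin

text \<open>The alphabet Sigma is a finite type 'a with two distinct distinguished letters
  zero and one; words are lists over 'a.\<close>

type_synonym var = nat
type_synonym 'a word = "'a list"
type_synonym 'a store = "var \<Rightarrow> 'a word"

datatype 'op expr = Var var | Op 'op "'op expr list" | Declass "'op expr" "'op expr"

datatype 'op stmt = Skip | Assign var "'op expr" | Seq "'op stmt" "'op stmt"
  | If "'op expr" "'op stmt" "'op stmt" | While "'op expr" "'op stmt" | Break "'op expr"

datatype 'op prog = Prog (params: "var list") (body: "'op stmt") (ret: var)

definition bool_w :: "'a \<Rightarrow> 'a \<Rightarrow> bool \<Rightarrow> 'a word" where
  "bool_w zero one b = (if b then [one] else [zero])"

definition std_ops :: "'a \<Rightarrow> 'a \<Rightarrow> ('op \<Rightarrow> nat) \<Rightarrow> ('op \<Rightarrow> 'a word list \<Rightarrow> 'a word) \<Rightarrow> bool" where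
  "std_ops zero one ar sem \<longleftrightarrow>
     (\<exists>op. ar op = 2 \<and> (\<forall>u v. sem op [u, v] = bool_w zero one (u = v))) \<and>
     (\<exists>op. ar op = 2 \<and> (\<forall>u v. sem op [u, v] = bool_w zero one (length u < length v))) \<and>
     (\<exists>op. ar op = 2 \<and> (\<forall>u v. sem op [u, v] = bool_w zero one (length u \<le> length v))) \<and>
     (\<exists>op. ar op = 0 \<and> sem op [] = [zero]) \<and>
     (\<exists>op. ar op = 1 \<and> (\<forall>w. sem op [w] = one # w)) \<and>
     (\<exists>op. ar op = 1 \<and> (\<forall>w. sem op [w] = tl w)) \<and>
     (\<exists>op. ar op = 1 \<and> (\<forall>w. sem op [w] = bool_w zero one (w \<noteq> [one]))) \<and>
     (\<exists>op. ar op = 2 \<and> (\<forall>u v. sem op [u, v] = bool_w zero one (u = [one] \<and> v = [one]))) \<and>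
     (\<exists>op. ar op = 2 \<and> (\<forall>u v. sem op [u, v] = bool_w zero one (u = [one] \<or> v = [one])))"

primrec eval :: "'a \<Rightarrow> ('op \<Rightarrow> 'a word list \<Rightarrow> 'a word) \<Rightarrow> 'a store \<Rightarrow> 'op expr \<Rightarrow> 'a word" where
  "eval one sem \<mu> (Var x) = \<mu> x"
| "eval one sem \<mu> (Op op es) = sem op (map (eval one sem \<mu>) es)"
| "eval one sem \<mu> (Declass e1 e2) =
     replicate (min (length (eval one sem \<mu> e1)) (length (eval one sem \<mu> e2))) one"

text \<open>Big-step evaluation; the flag True stands for \<open>\<top>\<close>, False for \<open>\<bottom>\<close>.\<close>
inductive big_step :: "'a \<Rightarrow> ('op \<Rightarrow> 'a word list \<Rightarrow> 'a word)
    \<Rightarrow> 'a store \<times> 'op stmt \<Rightarrow> bool \<times> 'a store \<Rightarrow> bool"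
  for one sem where
  BSkip: "big_step one sem (\<mu>, Skip) (True, \<mu>)"
| BAssign: "big_step one sem (\<mu>, Assign x e) (True, \<mu>(x := eval one sem \<mu> e))"
| BSeqBot: "big_step one sem (\<mu>, s1) (False, \<mu>1) \<Longrightarrow> big_step one sem (\<mu>, Seq s1 s2) (False, \<mu>1)"
| BSeq: "big_step one sem (\<mu>, s1) (True, \<mu>1) \<Longrightarrow> big_step one sem (\<mu>1, s2) (b, \<mu>2)
          \<Longrightarrow> big_step one sem (\<mu>, Seq s1 s2) (b, \<mu>2)"
| BIfT: "eval one sem \<mu> e = [one] \<Longrightarrow> big_step one sem (\<mu>, s1) (b, \<mu>')
          \<Longrightarrow> big_step one sem (\<mu>, If e s1 s2) (b, \<mu>')"
| BIfF: "eval one sem \<mu> e \<noteq> [one] \<Longrightarrow> big_step one sem (\<mu>, s2) (b, \<mu>')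
          \<Longrightarrow> big_step one sem (\<mu>, If e s1 s2) (b, \<mu>')"
| BWhileF: "eval one sem \<mu> e \<noteq> [one] \<Longrightarrow> big_step one sem (\<mu>, While e s) (True, \<mu>)"
| BWhileT: "eval one sem \<mu> e = [one] \<Longrightarrow> big_step one sem (\<mu>, Seq s (While e s)) (b, \<mu>')
          \<Longrightarrow> big_step one sem (\<mu>, While e s) (True, \<mu>')"
| BBreakT: "eval one sem \<mu> e = [one] \<Longrightarrow> big_step one sem (\<mu>, Break e) (False, \<mu>)"
| BBreakF: "eval one sem \<mu> e \<noteq> [one] \<Longrightarrow> big_step one sem (\<mu>, Break e) (True, \<mu>)"

text \<open>Evaluation trees (possibly infinite, for diverging runs) are described by their
  immediate-subtree relation on root configurations: \<open>tree_child c c'\<close> iff the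
  (unique) evaluation tree with root c has an immediate statement subtree with root c'.
  By determinism, \<open>\<pi>_c' \<sqsubseteq> \<pi>_c\<close> iff \<open>tree_child\<^sup>*\<^sup>* c c'\<close>
  and \<open>\<pi>_c' \<sqsubset> \<pi>_c\<close> iff \<open>tree_child\<^sup>+\<^sup>+ c c'\<close>.\<close>
inductive tree_child :: "'a \<Rightarrow> ('op \<Rightarrow> 'a word list \<Rightarrow> 'a word)
    \<Rightarrow> 'a store \<times> 'op stmt \<Rightarrow> 'a store \<times> 'op stmt \<Rightarrow> bool"
  for one sem where
  CSeq1: "tree_child one sem (\<mu>, Seq s1 s2) (\<mu>, s1)"
| CSeq2: "big_step one sem (\<mu>, s1) (True, \<mu>1) \<Longrightarrow> tree_child one sem (\<mu>, Seq s1 s2) (\<mu>1, s2)"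
| CIfT: "eval one sem \<mu> e = [one] \<Longrightarrow> tree_child one sem (\<mu>, If e s1 s2) (\<mu>, s1)"
| CIfF: "eval one sem \<mu> e \<noteq> [one] \<Longrightarrow> tree_child one sem (\<mu>, If e s1 s2) (\<mu>, s2)"
| CWhile: "eval one sem \<mu> e = [one] \<Longrightarrow> tree_child one sem (\<mu>, While e s) (\<mu>, Seq s (While e s))"

definition init_store :: "var list \<Rightarrow> 'a word list \<Rightarrow> 'a store" where
  "init_store xs ws = foldl (\<lambda>\<mu> (x, w). \<mu>(x := w)) (\<lambda>_. []) (zip xs ws)"

text \<open>\<open>computes P ws w\<close>: \<open>\<lbrakk>P\<rbrakk>(ws) = w\<close>.\<close>
definition computes :: "'a \<Rightarrow> ('op \<Rightarrow> 'a word list \<Rightarrow> 'a word) \<Rightarrow> 'op prog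
    \<Rightarrow> 'a word list \<Rightarrow> 'a word \<Rightarrow> bool" where
  "computes one sem P ws w \<longleftrightarrow> length ws = length (params P) \<and>
     (\<exists>b \<mu>'. big_step one sem (init_store (params P) ws, body P) (b, \<mu>') \<and> \<mu>' (ret P) = w)"

definition TERM_progs :: "'a \<Rightarrow> ('op \<Rightarrow> 'a word list \<Rightarrow> 'a word) \<Rightarrow> 'op prog set" where
  "TERM_progs one sem = {P. \<forall>ws. length ws = length (params P) \<longrightarrow> (\<exists>w. computes one sem P ws w)}"

definition same_fun :: "'a \<Rightarrow> ('op \<Rightarrow> 'a word list \<Rightarrow> 'a word) \<Rightarrow> 'op prog \<Rightarrow> 'op prog \<Rightarrow> bool" where
  "same_fun one sem P Q \<longleftrightarrow> (\<forall>ws w. computes one sem P ws w \<longleftrightarrow> computes one sem Q ws w)"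

primrec U :: "'op expr \<Rightarrow> var set" where
  "U (Var x) = {x}"
| "U (Op op es) = \<Union> (set (map U es))"
| "U (Declass e1 e2) = U e2"

definition AP :: "'a \<Rightarrow> ('op \<Rightarrow> 'a word list \<Rightarrow> 'a word) \<Rightarrow> 'op prog set" where
  "AP one sem = {P. \<not> (\<exists>\<mu> \<mu>' \<mu>'' e s.
      (tree_child one sem)\<^sup>*\<^sup>* (\<mu>, body P) (\<mu>', While e s) \<and>
      (tree_child one sem)\<^sup>+\<^sup>+ (\<mu>', While e s) (\<mu>'', While e s) \<and>
      (\<forall>x \<in> U e. \<mu>' x = \<mu>'' x))}"

definition subword :: "'a word \<Rightarrow> 'a word \<Rightarrow> bool" where
  "subword v w \<longleftrightarrow> (\<exists>u u'. w = u @ v @ u')"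

definition maxlen :: "'a word list \<Rightarrow> nat" where
  "maxlen ws = Max (insert 0 (length ` set ws))"

definition op_neutral :: "'a \<Rightarrow> 'a \<Rightarrow> ('op \<Rightarrow> nat) \<Rightarrow> ('op \<Rightarrow> 'a word list \<Rightarrow> 'a word) \<Rightarrow> 'op \<Rightarrow> bool" where
  "op_neutral zero one ar sem op \<longleftrightarrow>
     (\<forall>ws. length ws = ar op \<longrightarrow> sem op ws \<in> {[zero], [one]}) \<or>
     (\<exists>i < ar op. \<forall>ws. length ws = ar op \<longrightarrow> subword (sem op ws) (ws ! i))"

definition op_positive :: "('op \<Rightarrow> nat) \<Rightarrow> ('op \<Rightarrow> 'a word list \<Rightarrow> 'a word) \<Rightarrow> 'op \<Rightarrow> bool" where
  "op_positive ar sem op \<longleftrightarrow>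
     (\<exists>c::nat. \<forall>ws. length ws = ar op \<longrightarrow> length (sem op ws) \<le> maxlen ws + c)"

definition op_polynomial :: "('op \<Rightarrow> nat) \<Rightarrow> ('op \<Rightarrow> 'a word list \<Rightarrow> 'a word) \<Rightarrow> 'op \<Rightarrow> bool" where
  "op_polynomial ar sem op \<longleftrightarrow>
     (\<exists>p::nat poly. \<forall>ws. length ws = ar op \<longrightarrow> length (sem op ws) \<le> poly p (maxlen ws))"

text \<open>Polynomial-time computability via deterministic single-tape Turing machines.
  Tape symbols are naturals: 0 = blank, 1 = separator, letter a is \<open>to_nat a + 2\<close>.
  A machine is a transition function \<open>\<delta> q s = (q', s', move)\<close>; state 0 is initial,
  state 1 is halting. Configurations are (state, tape, head position).\<close>

type_synonym tm = "nat \<Rightarrow> nat \<Rightarrow> nat \<times> nat \<times> int"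

definition tm_step :: "tm \<Rightarrow> nat \<times> (int \<Rightarrow> nat) \<times> int \<Rightarrow> nat \<times> (int \<Rightarrow> nat) \<times> int" where
  "tm_step \<delta> c = (case c of (q, t, h) \<Rightarrow>
     if q = 1 then c else (case \<delta> q (t h) of (q', s', m) \<Rightarrow> (q', t(h := s'), h + m)))"

definition sym :: "'a::countable \<Rightarrow> nat" where
  "sym a = to_nat a + 2"

definition enc_input :: "'a::countable word list \<Rightarrow> nat list" where
  "enc_input ws = concat (map (\<lambda>w. map sym w @ [1]) ws)"

definition tape_of :: "nat list \<Rightarrow> int \<Rightarrow> nat" where
  "tape_of L i = (if 0 \<le> i \<and> i < int (length L) then L ! nat i else 0)"

definition ptime_computable :: "nat \<Rightarrow> ('a::countable word list \<Rightarrow> 'a word) \<Rightarrow> bool" where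
  "ptime_computable k f \<longleftrightarrow>
     (\<exists>(\<delta>::tm) (Q::nat) (S::nat) (p::nat poly).
        1 < Q \<and> (\<forall>a::'a. sym a < S) \<and>
        (\<forall>q < Q. \<forall>s < S. case \<delta> q s of (q', s', m) \<Rightarrow> q' < Q \<and> s' < S \<and> m \<in> {-1, 0, 1}) \<and>
        (\<forall>ws. length ws = k \<longrightarrow>
           (\<exists>n \<le> poly p (length (enc_input ws)).
              case (tm_step \<delta> ^^ n) (0, tape_of (enc_input ws), 0) of (q, t, h) \<Rightarrow>
                q = 1 \<and> (\<forall>i < length (f ws). t (h + int i) = sym (f ws ! i)) \<and>
                t (h + int (length (f ws))) = 0)))"

type_synonym 'op openv = "'op \<Rightarrow> (nat \<Rightarrow> nat \<Rightarrow> nat list set) option"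

text \<open>\<open>ety \<Gamma> \<Delta> ti to e \<tau>\<close> is \<open>\<Gamma>,\<Delta> \<turnstile>^ti_to e : \<tau>\<close>; a tuple
  \<open>\<tau>1 \<rightarrow> ... \<rightarrow> \<tau>(k+1)\<close> is the list [\<tau>1,...,\<tau>(k+1)].\<close>
inductive ety :: "('op \<Rightarrow> nat) \<Rightarrow> (var \<Rightarrow> nat) \<Rightarrow> 'op openv \<Rightarrow> nat \<Rightarrow> nat \<Rightarrow> 'op expr \<Rightarrow> nat \<Rightarrow> bool"
  for ar \<Gamma> \<Delta> where
  TVar: "\<Gamma> x = \<tau> \<Longrightarrow> ety ar \<Gamma> \<Delta> ti to (Var x) \<tau>"
| TOp: "\<Delta> op = Some D \<Longrightarrow> ts \<in> D ti to \<Longrightarrow> length es = ar op \<Longrightarrow> length ts = Suc (length es) \<Longrightarrow>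
        (\<forall>i < length es. ety ar \<Gamma> \<Delta> ti to (es ! i) (ts ! i)) \<Longrightarrow>
        ety ar \<Gamma> \<Delta> ti to (Op op es) (ts ! length es)"
| TDcl: "ety ar \<Gamma> \<Delta> ti to e1 \<tau>1 \<Longrightarrow> ety ar \<Gamma> \<Delta> ti to e2 to \<Longrightarrow> \<tau>1 \<le> \<tau> \<Longrightarrow> \<tau> \<le> to \<Longrightarrow>
        ety ar \<Gamma> \<Delta> ti to (Declass e1 e2) \<tau>"

inductive sty :: "('op \<Rightarrow> nat) \<Rightarrow> (var \<Rightarrow> nat) \<Rightarrow> 'op openv \<Rightarrow> nat \<Rightarrow> nat \<Rightarrow> 'op stmt \<Rightarrow> nat \<Rightarrow> bool"
  for ar \<Gamma> \<Delta> where
  TSub: "sty ar \<Gamma> \<Delta> ti to s \<tau> \<Longrightarrow> \<tau> \<le> \<tau>' \<Longrightarrow> sty ar \<Gamma> \<Delta> ti to s \<tau>'"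
| TSkip: "sty ar \<Gamma> \<Delta> ti to Skip 0"
| TAsg: "\<Gamma> x = \<tau>1 \<Longrightarrow> ety ar \<Gamma> \<Delta> ti to e \<tau>2 \<Longrightarrow> (to = 0 \<or> \<tau>1 \<le> \<tau>2) \<Longrightarrow>
        sty ar \<Gamma> \<Delta> ti to (Assign x e) \<tau>1"
| TSeq: "sty ar \<Gamma> \<Delta> ti to s1 \<tau> \<Longrightarrow> sty ar \<Gamma> \<Delta> ti to s2 \<tau> \<Longrightarrow> sty ar \<Gamma> \<Delta> ti to (Seq s1 s2) \<tau>"
| TCnd: "ety ar \<Gamma> \<Delta> ti to e \<tau> \<Longrightarrow> sty ar \<Gamma> \<Delta> ti to s1 \<tau> \<Longrightarrow> sty ar \<Gamma> \<Delta> ti to s2 \<tau> \<Longrightarrow>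
        sty ar \<Gamma> \<Delta> ti to (If e s1 s2) \<tau>"
| TWh: "ety ar \<Gamma> \<Delta> \<tau> to e \<tau> \<Longrightarrow> sty ar \<Gamma> \<Delta> \<tau> to s \<tau> \<Longrightarrow> 1 \<le> \<tau> \<Longrightarrow> \<tau> \<le> to \<Longrightarrow>
        sty ar \<Gamma> \<Delta> ti to (While e s) \<tau>"
| TWi: "ety ar \<Gamma> \<Delta> \<tau> \<tau> e \<tau> \<Longrightarrow> sty ar \<Gamma> \<Delta> \<tau> \<tau> s \<tau> \<Longrightarrow> 1 \<le> \<tau> \<Longrightarrow>
        sty ar \<Gamma> \<Delta> 0 0 (While e s) \<tau>"
| TBrk: "ety ar \<Gamma> \<Delta> ti to e \<tau> \<Longrightarrow> ti \<le> \<tau> \<Longrightarrow> sty ar \<Gamma> \<Delta> ti to (Break e) ti"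

definition safe_env :: "'a::countable \<Rightarrow> 'a \<Rightarrow> ('op \<Rightarrow> nat) \<Rightarrow> ('op \<Rightarrow> 'a word list \<Rightarrow> 'a word)
    \<Rightarrow> 'op openv \<Rightarrow> bool" where
  "safe_env zero one ar sem \<Delta> \<longleftrightarrow> (\<forall>op D. \<Delta> op = Some D \<longrightarrow>
     (op_neutral zero one ar sem op \<or> op_positive ar sem op \<or> op_polynomial ar sem op) \<and>
     ptime_computable (ar op) (sem op) \<and>
     (\<forall>ti to ts. ts \<in> D ti to \<longrightarrow> length ts = Suc (ar op) \<and>
        (op_neutral zero one ar sem op \<longrightarrow> (\<forall>i < ar op. ts ! ar op \<le> ts ! i)) \<and>
        (op_positive ar sem op \<and> \<not> op_neutral zero one ar sem op \<longrightarrow>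
            (\<forall>i < ar op. ts ! ar op \<le> ts ! i) \<and> (ts ! ar op < ti \<or> ts ! ar op = 0)) \<and>
        (op_polynomial ar sem op \<and> \<not> op_positive ar sem op \<longrightarrow> to = 0)))"

definition SAFE :: "'a::countable \<Rightarrow> 'a \<Rightarrow> ('op \<Rightarrow> nat) \<Rightarrow> ('op \<Rightarrow> 'a word list \<Rightarrow> 'a word)
    \<Rightarrow> 'op prog set" where
  "SAFE zero one ar sem = {P. \<exists>\<Gamma> \<Delta> \<tau>. safe_env zero one ar sem \<Delta> \<and> sty ar \<Gamma> \<Delta> 0 0 (body P) \<tau>}"

end

theory Submission
  imports Defs
begin


definition pm :: "(nat \<Rightarrow> nat) \<Rightarrow> bool" where
  "pm f \<longleftrightarrow> mono f \<and> (\<exists>c k. \<forall>y. f y \<le> c * (y + 1) ^ k)"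

lemma pm_const: "pm (\<lambda>y. c)"
proof -
  have "\<forall>y. c \<le> c * (y + 1) ^ (0::nat)" by simp
  then have "\<exists>c' k. \<forall>y. c \<le> c' * (y + 1) ^ k" by blast
  then show ?thesis unfolding pm_def by (auto intro!: monoI)
qed

lemma pm_id: "pm (\<lambda>y. y)"
  unfolding pm_def by (auto intro!: monoI exI[of _ 1] exI[of _ 1])

lemma pow_mono_exp: "(y+1::nat) ^ a \<le> (y+1) ^ max a b" "(y+1::nat) ^ b \<le> (y+1) ^ max a b"
  by (auto intro: power_increasing)

lemma pm_add: assumes "pm f" "pm g" shows "pm (\<lambda>y. f y + g y)"
proof -
  obtain c k where f: "\<forall>y. f y \<le> c * (y + 1) ^ k" using assms(1) unfolding pm_def by blast
  obtain d l where g: "\<forall>y. g y \<le> d * (y + 1) ^ l" using assms(2) unfolding pm_def by blast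
  have "f y + g y \<le> (c + d) * (y+1) ^ max k l" for y
  proof -
    have "f y \<le> c * (y+1) ^ max k l" using f pow_mono_exp(1)[of y k l] by (meson le_trans mult_le_mono2)
    moreover have "g y \<le> d * (y+1) ^ max k l"
    proof -
      have "(y+1) ^ l \<le> (y+1::nat) ^ max k l" by (rule power_increasing) auto
      then show ?thesis using g by (meson le_trans mult_le_mono2)
    qed
    ultimately show ?thesis by (simp add: add_mult_distrib)
  qed
  moreover have "mono (\<lambda>y. f y + g y)" using assms unfolding pm_def mono_def by (simp add: add_mono)
  ultimately show ?thesis unfolding pm_def by blast
qed

lemma pm_mult: assumes "pm f" "pm g" shows "pm (\<lambda>y. f y * g y)"
proof -
  obtain c k where f: "\<forall>y. f y \<le> c * (y + 1) ^ k" using assms(1) unfolding pm_def by blast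
  obtain d l where g: "\<forall>y. g y \<le> d * (y + 1) ^ l" using assms(2) unfolding pm_def by blast
  have "f y * g y \<le> (c * d) * (y+1) ^ (k + l)" for y
  proof -
    have "f y * g y \<le> (c * (y + 1) ^ k) * (d * (y + 1) ^ l)" using f g by (simp add: mult_le_mono)
    then show ?thesis by (simp add: power_add mult_ac)
  qed
  moreover have "mono (\<lambda>y. f y * g y)" using assms unfolding pm_def mono_def by (simp add: mult_le_mono)
  ultimately show ?thesis unfolding pm_def by blast
qed

lemma pm_comp: assumes "pm f" "pm g" shows "pm (\<lambda>y. f (g y))"
proof -
  obtain c k where f: "\<forall>y. f y \<le> c * (y + 1) ^ k" using assms(1) unfolding pm_def by blast
  obtain d l where g: "\<forall>y. g y \<le> d * (y + 1) ^ l" using assms(2) unfolding pm_def by blast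
  have "f (g y) \<le> (c * (d + 1) ^ k) * (y+1) ^ (l * k)" for y
  proof -
    have "g y + 1 \<le> (d + 1) * (y + 1) ^ l"
    proof -
      have "1 \<le> (y+1::nat) ^ l" by simp
      moreover have "(d+1)*(y+1)^l = d*(y+1)^l + (y+1::nat)^l" by (simp add: algebra_simps)
      ultimately show ?thesis using g[rule_format, of y] by linarith
    qed
    then have "(g y + 1) ^ k \<le> ((d + 1) * (y + 1) ^ l) ^ k" by (rule power_mono) simp
    then have "f (g y) \<le> c * ((d + 1) * (y + 1) ^ l) ^ k" using f[rule_format, of "g y"]
      by (meson le_trans mult_le_mono2)
    also have "c * ((d + 1) * (y + 1) ^ l) ^ k = (c * (d + 1) ^ k) * (y+1) ^ (l * k)"
      by (simp only: power_mult_distrib power_mult[symmetric] mult.commute[of l k] mult.assoc)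
    finally show ?thesis .
  qed
  moreover have "mono (\<lambda>y. f (g y))" using assms unfolding pm_def mono_def by simp
  ultimately show ?thesis unfolding pm_def by blast
qed

lemma pm_sum: "finite A \<Longrightarrow> (\<forall>i\<in>A. pm (g i)) \<Longrightarrow> pm (\<lambda>y. \<Sum>i\<in>A. g i y)"
proof (induction rule: finite_induct)
  case empty then show ?case using pm_const[of 0] by simp
next
  case (insert x F)
  then show ?case using pm_add[of "g x" "\<lambda>y. \<Sum>i\<in>F. g i y"] by simp
qed

lemma pm_mono: "pm f \<Longrightarrow> a \<le> b \<Longrightarrow> f a \<le> f b"
  unfolding pm_def mono_def by blast

lemma pm_pow: "pm (\<lambda>y. (y + 1) ^ k)"
proof -
  have "mono (\<lambda>y. (y + 1::nat) ^ k)" by (auto intro!: monoI power_mono)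
  moreover have "\<forall>y. (y + 1::nat) ^ k \<le> 1 * (y + 1) ^ k" by simp
  ultimately show ?thesis unfolding pm_def by blast
qed

fun H :: "(nat \<Rightarrow> nat) \<Rightarrow> nat \<Rightarrow> nat \<Rightarrow> nat \<Rightarrow> nat" where
  "H p 0 i Y = Y"
| "H p (Suc d) i Y = Y + i * p (Y + H p d i Y)"

lemma H_ge: "Y \<le> H p d i Y" by (cases d) auto

lemma H_mono_i: "mono p \<Longrightarrow> i \<le> i' \<Longrightarrow> H p d i Y \<le> H p d i' Y"
proof (induction d)
  case 0 then show ?case by simp
next
  case (Suc d)
  then have "p (Y + H p d i Y) \<le> p (Y + H p d i' Y)" by (simp add: monoD)
  then show ?case using Suc by (simp add: mult_le_mono)
qed

lemma H_mono_d: "mono p \<Longrightarrow> H p d i Y \<le> H p (Suc d) i Y"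
proof (induction d)
  case 0 then show ?case by simp
next
  case (Suc d)
  then have "p (Y + H p d i Y) \<le> p (Y + H p (Suc d) i Y)" by (simp add: monoD)
  then show ?case by (simp add: mult_le_mono)
qed

lemma H_mono_d': "mono p \<Longrightarrow> d \<le> d' \<Longrightarrow> H p d i Y \<le> H p d' i Y"
proof (induction d')
  case 0 then show ?case by simp
next
  case (Suc d')
  then show ?case using H_mono_d[of p d' i Y] by (auto simp: le_Suc_eq)
qed

lemma arith_levels:
  fixes x :: "nat \<Rightarrow> nat \<Rightarrow> nat"
  assumes p: "mono p"
    and step: "\<forall>i<m. \<forall>k. x (Suc i) k \<le> x i k + p (x i (Suc k))"
    and top: "\<forall>i\<le>m. \<forall>k\<ge>K. x i k \<le> C"
  shows "K \<le> k + d \<Longrightarrow> i \<le> m \<Longrightarrow> C \<le> Y \<Longrightarrow> (\<forall>k'>k. x 0 k' \<le> Y) \<Longrightarrow> x i k \<le> x 0 k + H p d i Y"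
proof (induction d arbitrary: k i)
  case 0
  then have "x i k \<le> C" using top by auto
  then show ?case using 0 by simp
next
  case (Suc d)
  show ?case
  proof (cases "K \<le> k")
    case True
    then have "x i k \<le> C" using top Suc by auto
    then show ?thesis using Suc H_ge[of Y p "Suc d" i] by linarith
  next
    case False
    have hk1: "x i' (Suc k) \<le> Y + H p d i' Y" if "i' \<le> m" for i'
    proof -
      have "x i' (Suc k) \<le> x 0 (Suc k) + H p d i' Y"
        using Suc.IH[of "Suc k" i'] Suc.prems that by auto
      moreover have "x 0 (Suc k) \<le> Y" using Suc.prems by auto
      ultimately show ?thesis by simp
    qed
    have "x j k \<le> x 0 k + j * p (Y + H p d j Y)" if "j \<le> i" for j
      using that
    proof (induction j)
      case 0 then show ?case by simp
    next
      case (Suc j)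
      have jm: "j < m" using Suc.prems \<open>i \<le> m\<close> by simp
      have "x (Suc j) k \<le> x j k + p (x j (Suc k))" using step jm by blast
      also have "p (x j (Suc k)) \<le> p (Y + H p d (Suc j) Y)"
      proof -
        have "x j (Suc k) \<le> Y + H p d j Y" using hk1 jm by simp
        also have "\<dots> \<le> Y + H p d (Suc j) Y" using H_mono_i[OF p, of j "Suc j" d Y] by simp
        finally show ?thesis using p by (simp add: monoD)
      qed
      also have "x j k \<le> x 0 k + j * p (Y + H p d j Y)" using Suc by simp
      also have "j * p (Y + H p d j Y) \<le> j * p (Y + H p d (Suc j) Y)"
        using H_mono_i[OF p, of j "Suc j" d Y] p by (simp add: monoD)
      finally show ?case by simp
    qed
    from this[of i] show ?thesis by simp
  qed
qed

lemma pm_H: assumes "pm p" "pm q" shows "pm (\<lambda>y. H p d (q y) (y + 1))"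
proof (induction d)
  case 0 then show ?case using pm_add[OF pm_id pm_const[of 1]] by simp
next
  case (Suc d)
  have a: "pm (\<lambda>y. y + 1)" using pm_add[OF pm_id pm_const[of 1]] by simp
  have "pm (\<lambda>y. p (y + 1 + H p d (q y) (y + 1)))"
    using pm_comp[OF assms(1) pm_add[OF a Suc]] by simp
  then have "pm (\<lambda>y. q y * p (y + 1 + H p d (q y) (y + 1)))" using pm_mult[OF assms(2)] by blast
  then show ?case using pm_add[OF a] by simp
qed


primrec evars :: "'op expr \<Rightarrow> var set" where
  "evars (Var x) = {x}"
| "evars (Op op es) = \<Union> (set (map evars es))"
| "evars (Declass e1 e2) = evars e1 \<union> evars e2"

primrec svars :: "'op stmt \<Rightarrow> var set" where
  "svars Skip = {}"
| "svars (Assign x e) = insert x (evars e)"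
| "svars (Seq a b) = svars a \<union> svars b"
| "svars (If e a b) = evars e \<union> svars a \<union> svars b"
| "svars (While e a) = evars e \<union> svars a"
| "svars (Break e) = evars e"

lemma finite_evars: "finite (evars e)"
  by (induction e) auto

lemma finite_svars: "finite (svars s)"
  by (induction s) (auto simp: finite_evars)

lemma U_evars: "U e \<subseteq> evars e"
  by (induction e) auto

primrec subs :: "'op stmt \<Rightarrow> 'op stmt set" where
  "subs Skip = {Skip}"
| "subs (Assign x e) = {Assign x e}"
| "subs (Seq a b) = insert (Seq a b) (subs a \<union> subs b)"
| "subs (If e a b) = insert (If e a b) (subs a \<union> subs b)"
| "subs (While e a) = insert (While e a) (subs a)"
| "subs (Break e) = {Break e}"

definition cl :: "'op stmt \<Rightarrow> 'op stmt set" where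
  "cl s = subs s \<union> (\<lambda>t. case t of While e a \<Rightarrow> Seq a (While e a) | _ \<Rightarrow> t) ` subs s"

lemma finite_subs: "finite (subs s)" by (induction s) auto
lemma finite_cl: "finite (cl s)" by (simp add: cl_def finite_subs)
lemma subs_self: "s \<in> subs s" by (cases s) auto
lemma subs_trans: "t \<in> subs s \<Longrightarrow> subs t \<subseteq> subs s"
  by (induction s) auto

lemma self_cl: "s \<in> cl s" by (simp add: cl_def subs_self)

lemma cl_iff: "s \<in> cl b \<longleftrightarrow> s \<in> subs b \<or> (\<exists>e a. s = Seq a (While e a) \<and> While e a \<in> subs b)"
  unfolding cl_def by (auto split: stmt.splits)

lemma tree_child_cl:
  assumes "tree_child one sem c c'" "snd c \<in> cl b"
  shows "snd c' \<in> cl b"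
  using assms
proof (cases rule: tree_child.cases)
  case (CSeq1 \<mu> s1 s2)
  then show ?thesis using assms(2) subs_trans[of "Seq s1 s2" b] subs_trans[of "While _ s1" b] subs_self[of s1]
    unfolding cl_iff by auto
next
  case (CSeq2 \<mu> s1 \<mu>1 s2)
  then show ?thesis using assms(2) subs_trans[of "Seq s1 s2" b] subs_self[of s2]
    unfolding cl_iff by auto
next
  case (CIfT \<mu> e s1 s2)
  then show ?thesis using assms(2) subs_trans[of "If e s1 s2" b] subs_self[of s1]
    unfolding cl_iff by auto
next
  case (CIfF \<mu> e s1 s2)
  then show ?thesis using assms(2) subs_trans[of "If e s1 s2" b] subs_self[of s2]
    unfolding cl_iff by auto
next
  case (CWhile \<mu> e s)
  then show ?thesis using assms(2) unfolding cl_iff by auto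
qed

lemma tree_child_svars:
  assumes "tree_child one sem c c'"
  shows "svars (snd c') \<subseteq> svars (snd c)"
  using assms by (cases rule: tree_child.cases) auto

lemma tree_child_size:
  assumes "tree_child one sem c c'" "\<not> (\<exists>e a. snd c = While e a)"
  shows "size (snd c') < size (snd c)"
  using assms by (cases rule: tree_child.cases) auto

section \<open>Typing inversion\<close>

lemma sty_seqE:
  assumes "sty ar \<Gamma> \<Delta> ti to s \<sigma>" "s = Seq s1 s2"
  shows "\<exists>\<sigma>'\<le>\<sigma>. sty ar \<Gamma> \<Delta> ti to s1 \<sigma>' \<and> sty ar \<Gamma> \<Delta> ti to s2 \<sigma>'"
  using assms by (induction rule: sty.induct) (auto intro: le_trans)

lemma sty_ifE:
  assumes "sty ar \<Gamma> \<Delta> ti to s \<sigma>" "s = If e s1 s2"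
  shows "\<exists>\<sigma>'\<le>\<sigma>. ety ar \<Gamma> \<Delta> ti to e \<sigma>' \<and> sty ar \<Gamma> \<Delta> ti to s1 \<sigma>' \<and> sty ar \<Gamma> \<Delta> ti to s2 \<sigma>'"
  using assms by (induction rule: sty.induct) (auto intro: le_trans)

lemma sty_assignE:
  assumes "sty ar \<Gamma> \<Delta> ti to s \<sigma>" "s = Assign x e"
  shows "\<exists>\<tau>2. \<Gamma> x \<le> \<sigma> \<and> ety ar \<Gamma> \<Delta> ti to e \<tau>2 \<and> (to = 0 \<or> \<Gamma> x \<le> \<tau>2)"
  using assms by (induction rule: sty.induct) (auto intro: le_trans)

lemma sty_breakE:
  assumes "sty ar \<Gamma> \<Delta> ti to s \<sigma>" "s = Break e"
  shows "\<exists>\<tau>. ety ar \<Gamma> \<Delta> ti to e \<tau> \<and> ti \<le> \<tau> \<and> ti \<le> \<sigma>"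
  using assms by (induction rule: sty.induct) (auto intro: le_trans)

lemma sty_whileE:
  assumes "sty ar \<Gamma> \<Delta> ti to s \<sigma>" "s = While e a"
  shows "(\<exists>\<tau>'. \<tau>' \<le> \<sigma> \<and> 1 \<le> \<tau>' \<and> \<tau>' \<le> to \<and> ety ar \<Gamma> \<Delta> \<tau>' to e \<tau>' \<and> sty ar \<Gamma> \<Delta> \<tau>' to a \<tau>')
     \<or> (ti = 0 \<and> to = 0 \<and> (\<exists>\<tau>'. \<tau>' \<le> \<sigma> \<and> 1 \<le> \<tau>' \<and> ety ar \<Gamma> \<Delta> \<tau>' \<tau>' e \<tau>' \<and> sty ar \<Gamma> \<Delta> \<tau>' \<tau>' a \<tau>'))"
  using assms by (induction rule: sty.induct) (auto intro: le_trans)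

definition reach :: "'a \<Rightarrow> ('op \<Rightarrow> 'a word list \<Rightarrow> 'a word) \<Rightarrow> 'op stmt \<Rightarrow> 'a store \<times> 'op stmt \<Rightarrow> bool" where
  "reach one sem b c \<longleftrightarrow> (\<exists>\<mu>. (tree_child one sem)\<^sup>*\<^sup>* (\<mu>, b) c)"

lemma reach_step: "reach one sem b c \<Longrightarrow> tree_child one sem c c' \<Longrightarrow> reach one sem b c'"
  unfolding reach_def by (meson rtranclp.rtrancl_into_rtrancl)

lemma reach_init: "reach one sem b (\<mu>, b)"
  unfolding reach_def by blast

lemma reach_svars: "reach one sem b c \<Longrightarrow> svars (snd c) \<subseteq> svars b"
  unfolding reach_def
proof (elim exE)
  fix \<mu> assume "(tree_child one sem)\<^sup>*\<^sup>* (\<mu>, b) c"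
  then show "svars (snd c) \<subseteq> svars b"
    by (induction rule: rtranclp_induct) (use tree_child_svars in fastforce)+
qed


section \<open>Safe operators\<close>

lemma safe_op:
  assumes "safe_env zero one ar sem \<Delta>" "\<Delta> op = Some D" "ts \<in> D ti to" "to \<noteq> 0"
  shows "length ts = Suc (ar op) \<and> (\<forall>i < ar op. ts ! ar op \<le> ts ! i) \<and>
         (op_neutral zero one ar sem op \<or> ts ! ar op < ti \<or> ts ! ar op = 0)"
  using assms unfolding safe_env_def by metis

lemma ety_U_level:
  assumes "ety ar \<Gamma> \<Delta> ti to e \<rho>" "safe_env zero one ar sem \<Delta>" "to \<noteq> 0"
  shows "x \<in> U e \<Longrightarrow> \<rho> \<le> \<Gamma> x"
  using assms
proof (induction rule: ety.induct)
  case (TVar x \<tau> ti to)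
  then show ?case by simp
next
  case (TOp op D ts ti to es)
  from TOp.prems(1) obtain i where i: "i < length es" "x \<in> U (es ! i)"
    by (auto simp: in_set_conv_nth)
  have "ts ! i \<le> \<Gamma> x" using TOp.IH i TOp.prems by blast
  moreover have "ts ! length es \<le> ts ! i"
    using safe_op[OF TOp.prems(2) TOp.hyps(1,2) TOp.prems(3)] TOp.hyps(3) i by auto
  ultimately show ?case by simp
next
  case (TDcl ti to e1 \<tau>1 e2 \<tau>)
  then show ?case by force
qed

definition closedS :: "'a \<Rightarrow> 'a \<Rightarrow> 'a word set \<Rightarrow> bool" where
  "closedS zero one S \<longleftrightarrow> [zero] \<in> S \<and> [one] \<in> S \<and> (\<forall>v\<in>S. \<forall>u. subword u v \<longrightarrow> u \<in> S)
     \<and> (\<forall>v\<in>S. \<forall>k\<le>length v. replicate k one \<in> S)"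

lemma ety_S:
  assumes "ety ar \<Gamma> \<Delta> ti to e \<rho>" "safe_env zero one ar sem \<Delta>" "to \<noteq> 0"
    "ti \<le> \<tau>" "1 \<le> \<tau>" "\<tau> \<le> \<rho>" "evars e \<subseteq> V" "\<forall>x\<in>V. \<tau> \<le> \<Gamma> x \<longrightarrow> \<mu> x \<in> S"
    "closedS zero one S"
  shows "eval one sem \<mu> e \<in> S"
  using assms
proof (induction rule: ety.induct)
  case (TVar x \<tau>' ti to)
  then show ?case by auto
next
  case (TOp op D ts ti to es)
  have sop: "length ts = Suc (ar op) \<and> (\<forall>i < ar op. ts ! ar op \<le> ts ! i) \<and>
         (op_neutral zero one ar sem op \<or> ts ! ar op < ti \<or> ts ! ar op = 0)"
    using safe_op[OF TOp.prems(1) TOp.hyps(1,2) TOp.prems(2)] .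
  let ?ws = "map (eval one sem \<mu>) es"
  have lws: "length ?ws = ar op" using TOp.hyps(3) by simp
  have neu: "op_neutral zero one ar sem op"
    using sop TOp.prems(3,4,5) TOp.hyps(3) by auto
  have inS: "\<And>i. i < length es \<Longrightarrow> ?ws ! i \<in> S"
  proof -
    fix i assume i: "i < length es"
    have "\<tau> \<le> ts ! i" using sop TOp.prems(5) TOp.hyps(3) i by force
    moreover have "evars (es ! i) \<subseteq> V" using TOp.prems(6) i nth_mem by fastforce
    ultimately show "?ws ! i \<in> S" using TOp.IH i TOp.prems by auto
  qed
  from neu show ?case
    unfolding op_neutral_def
  proof
    assume "\<forall>ws. length ws = ar op \<longrightarrow> sem op ws \<in> {[zero], [one]}"
    then have "sem op ?ws \<in> {[zero], [one]}" using lws by blast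
    then show ?thesis using TOp.prems(8) by (auto simp: closedS_def)
  next
    assume "\<exists>i<ar op. \<forall>ws. length ws = ar op \<longrightarrow> subword (sem op ws) (ws ! i)"
    then obtain i where "i < ar op" "subword (sem op ?ws) (?ws ! i)" using lws by blast
    then show ?thesis using inS[of i] TOp.hyps(3) TOp.prems(8) by (auto simp: closedS_def)
  qed
next
  case (TDcl ti to e1 \<tau>1 e2 \<tau>')
  have "eval one sem \<mu> e2 \<in> S" using TDcl by auto
  then show ?case using TDcl.prems(8) by (auto simp: closedS_def)
qed

definition Inv :: "(var \<Rightarrow> nat) \<Rightarrow> var set \<Rightarrow> nat \<Rightarrow> 'a word set \<Rightarrow> 'a store \<Rightarrow> bool" where
  "Inv \<Gamma> V \<tau> S \<mu> \<longleftrightarrow> (\<forall>x\<in>V. \<tau> \<le> \<Gamma> x \<longrightarrow> \<mu> x \<in> S)"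

lemma inv_big_step:
  assumes "big_step one sem c r" "safe_env zero one ar sem \<Delta>" "closedS zero one S"
    "1 \<le> \<tau>" "\<tau> \<le> T"
  shows "sty ar \<Gamma> \<Delta> ti T (snd c) \<sigma> \<Longrightarrow> ti \<le> \<tau> \<Longrightarrow> \<sigma> \<le> \<tau> \<Longrightarrow> svars (snd c) \<subseteq> V
    \<Longrightarrow> Inv \<Gamma> V \<tau> S (fst c) \<Longrightarrow> Inv \<Gamma> V \<tau> S (snd r)"
  using assms(1)
proof (induction arbitrary: ti \<sigma> rule: big_step.induct)
  case (BAssign \<mu> x e)
  obtain \<tau>2 where t: "\<Gamma> x \<le> \<sigma>" "ety ar \<Gamma> \<Delta> ti T e \<tau>2" "T = 0 \<or> \<Gamma> x \<le> \<tau>2"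
    using sty_assignE[OF BAssign.prems(1)] by auto
  show ?case unfolding Inv_def
  proof (intro ballI impI)
    fix y assume y: "y \<in> V" "\<tau> \<le> \<Gamma> y"
    show "(snd (True, \<mu>(x := eval one sem \<mu> e))) y \<in> S"
    proof (cases "y = x")
      case True
      have "eval one sem \<mu> e \<in> S"
        using ety_S[OF t(2) assms(2) _ BAssign.prems(2) assms(4) _ _ _ assms(3), of V \<mu>]
          t BAssign.prems y True assms(4,5) by (auto simp: Inv_def)
      then show ?thesis using True by simp
    next
      case False
      then show ?thesis using BAssign.prems(5) y by (auto simp: Inv_def)
    qed
  qed
next
  case (BSeqBot \<mu> s1 \<mu>1 s2)
  then show ?case using sty_seqE[of ar \<Gamma> \<Delta> ti T "Seq s1 s2" \<sigma> s1 s2] by fastforce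
next
  case (BSeq \<mu> s1 \<mu>1 s2 b \<mu>2)
  obtain \<sigma>' where "\<sigma>' \<le> \<sigma>" "sty ar \<Gamma> \<Delta> ti T s1 \<sigma>'" "sty ar \<Gamma> \<Delta> ti T s2 \<sigma>'"
    using sty_seqE[OF BSeq.prems(1)] by auto
  then show ?case using BSeq by fastforce
next
  case (BIfT \<mu> e s1 b \<mu>' s2)
  then show ?case using sty_ifE[of ar \<Gamma> \<Delta> ti T "If e s1 s2" \<sigma> e s1 s2] by fastforce
next
  case (BIfF \<mu> e s2 b \<mu>' s1)
  then show ?case using sty_ifE[of ar \<Gamma> \<Delta> ti T "If e s1 s2" \<sigma> e s1 s2] by fastforce
next
  case (BWhileT \<mu> e s b \<mu>')
  from sty_whileE[OF BWhileT.prems(1), of e s] assms(4,5)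
  obtain \<tau>' where t: "\<tau>' \<le> \<sigma>" "1 \<le> \<tau>'" "\<tau>' \<le> T" "ety ar \<Gamma> \<Delta> \<tau>' T e \<tau>'" "sty ar \<Gamma> \<Delta> \<tau>' T s \<tau>'"
    by auto
  have "sty ar \<Gamma> \<Delta> \<tau>' T (Seq s (While e s)) \<tau>'"
    using t by (intro TSeq TWh) auto
  then show ?case using BWhileT t by fastforce
qed auto


lemma child_typ:
  assumes "tree_child one sem c c'" "sty ar \<Gamma> \<Delta> ti to (snd c) \<sigma>"
  shows "\<exists>ti' to' \<sigma>'. sty ar \<Gamma> \<Delta> ti' to' (snd c') \<sigma>'"
  using assms(1)
proof (cases rule: tree_child.cases)
  case (CSeq1 \<mu> s1 s2)
  then show ?thesis using sty_seqE[OF assms(2)] by auto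
next
  case (CSeq2 \<mu> s1 \<mu>1 s2)
  then show ?thesis using sty_seqE[OF assms(2)] by auto
next
  case (CIfT \<mu> e s1 s2)
  then show ?thesis using sty_ifE[OF assms(2)] by auto
next
  case (CIfF \<mu> e s1 s2)
  then show ?thesis using sty_ifE[OF assms(2)] by auto
next
  case (CWhile \<mu> e s)
  have w: "(\<exists>\<tau>'. \<tau>' \<le> \<sigma> \<and> 1 \<le> \<tau>' \<and> \<tau>' \<le> to \<and> ety ar \<Gamma> \<Delta> \<tau>' to e \<tau>' \<and> sty ar \<Gamma> \<Delta> \<tau>' to s \<tau>')
     \<or> (ti = 0 \<and> to = 0 \<and> (\<exists>\<tau>'. \<tau>' \<le> \<sigma> \<and> 1 \<le> \<tau>' \<and> ety ar \<Gamma> \<Delta> \<tau>' \<tau>' e \<tau>' \<and> sty ar \<Gamma> \<Delta> \<tau>' \<tau>' s \<tau>'))"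
    using sty_whileE[OF assms(2), of e s] CWhile by simp
  from w show ?thesis
  proof (elim disjE exE conjE)
    fix \<tau>' assume t: "1 \<le> \<tau>'" "\<tau>' \<le> to" "ety ar \<Gamma> \<Delta> \<tau>' to e \<tau>'" "sty ar \<Gamma> \<Delta> \<tau>' to s \<tau>'"
    have "sty ar \<Gamma> \<Delta> \<tau>' to (Seq s (While e s)) \<tau>'" using t by (intro TSeq TWh) auto
    then show ?thesis using CWhile by auto
  next
    fix \<tau>' assume t: "1 \<le> \<tau>'" "ety ar \<Gamma> \<Delta> \<tau>' \<tau>' e \<tau>'" "sty ar \<Gamma> \<Delta> \<tau>' \<tau>' s \<tau>'"
    have "sty ar \<Gamma> \<Delta> \<tau>' \<tau>' (Seq s (While e s)) \<tau>'" using t by (intro TSeq TWh) auto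
    then show ?thesis using CWhile by auto
  qed
qed

definition ctx :: "('op \<Rightarrow> nat) \<Rightarrow> (var \<Rightarrow> nat) \<Rightarrow> 'op openv \<Rightarrow> nat \<Rightarrow> nat \<Rightarrow> 'op stmt \<Rightarrow> bool" where
  "ctx ar \<Gamma> \<Delta> T \<tau> s \<longleftrightarrow> (\<exists>ti \<sigma>. sty ar \<Gamma> \<Delta> ti T s \<sigma> \<and> ti \<le> \<tau> \<and> \<sigma> \<le> \<tau>)"

lemma child_ctx:
  assumes "tree_child one sem c c'" "ctx ar \<Gamma> \<Delta> T \<tau> (snd c)" "1 \<le> \<tau>" "\<tau> \<le> T"
  shows "ctx ar \<Gamma> \<Delta> T \<tau> (snd c')"
proof -
  obtain ti \<sigma> where ty: "sty ar \<Gamma> \<Delta> ti T (snd c) \<sigma>" "ti \<le> \<tau>" "\<sigma> \<le> \<tau>"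
    using assms(2) unfolding ctx_def by blast
  show ?thesis using assms(1)
  proof (cases rule: tree_child.cases)
    case (CSeq1 \<mu> s1 s2)
    then show ?thesis using sty_seqE[OF ty(1)] ty unfolding ctx_def by fastforce
  next
    case (CSeq2 \<mu> s1 \<mu>1 s2)
    then show ?thesis using sty_seqE[OF ty(1)] ty unfolding ctx_def by fastforce
  next
    case (CIfT \<mu> e s1 s2)
    then show ?thesis using sty_ifE[OF ty(1)] ty unfolding ctx_def by fastforce
  next
    case (CIfF \<mu> e s1 s2)
    then show ?thesis using sty_ifE[OF ty(1)] ty unfolding ctx_def by fastforce
  next
    case (CWhile \<mu> e s)
    from sty_whileE[OF ty(1), of e s] CWhile assms(3,4)
    obtain \<tau>' where t: "\<tau>' \<le> \<sigma>" "1 \<le> \<tau>'" "\<tau>' \<le> T" "ety ar \<Gamma> \<Delta> \<tau>' T e \<tau>'" "sty ar \<Gamma> \<Delta> \<tau>' T s \<tau>'"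
      by auto
    have "sty ar \<Gamma> \<Delta> \<tau>' T (Seq s (While e s)) \<tau>'" using t by (intro TSeq TWh) auto
    then show ?thesis using CWhile t ty unfolding ctx_def by fastforce
  qed
qed

lemma child_inv:
  assumes "tree_child one sem c c'" "ctx ar \<Gamma> \<Delta> T \<tau> (snd c)" "1 \<le> \<tau>" "\<tau> \<le> T"
    "safe_env zero one ar sem \<Delta>" "closedS zero one S" "svars (snd c) \<subseteq> V" "Inv \<Gamma> V \<tau> S (fst c)"
  shows "Inv \<Gamma> V \<tau> S (fst c')"
proof -
  obtain ti \<sigma> where ty: "sty ar \<Gamma> \<Delta> ti T (snd c) \<sigma>" "ti \<le> \<tau>" "\<sigma> \<le> \<tau>"
    using assms(2) unfolding ctx_def by blast
  show ?thesis using assms(1)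
  proof (cases rule: tree_child.cases)
    case (CSeq2 \<mu> s1 \<mu>1 s2)
    obtain \<sigma>' where "\<sigma>' \<le> \<sigma>" "sty ar \<Gamma> \<Delta> ti T s1 \<sigma>'" using sty_seqE[OF ty(1)] CSeq2 by auto
    then show ?thesis
      using inv_big_step[OF CSeq2(3) assms(5,6,3,4), of \<Gamma> ti \<sigma>' V] CSeq2 ty assms(7,8) by auto
  qed (use assms in auto)
qed

definition nores :: "'a \<Rightarrow> ('op \<Rightarrow> 'a word list \<Rightarrow> 'a word) \<Rightarrow> 'a store \<times> 'op stmt \<Rightarrow> bool" where
  "nores one sem c \<longleftrightarrow> \<not> (\<exists>r. big_step one sem c r)"

lemma nores_step:
  assumes "nores one sem c"
  shows "\<exists>c'. tree_child one sem c c' \<and> nores one sem c'"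
proof -
  obtain \<mu> s where c: "c = (\<mu>, s)" by fastforce
  show ?thesis
  proof (cases s)
    case Skip then show ?thesis using assms c BSkip[of one sem \<mu>] unfolding nores_def split_paired_Ex by blast
  next
    case (Assign x e) then show ?thesis using assms c BAssign[of one sem \<mu> x e] unfolding nores_def split_paired_Ex by blast
  next
    case (Break e) then show ?thesis using assms c BBreakT[of one sem \<mu> e] BBreakF[of one sem \<mu> e] unfolding nores_def split_paired_Ex by blast
  next
    case (Seq s1 s2)
    show ?thesis
    proof (cases "nores one sem (\<mu>, s1)")
      case True then show ?thesis using c Seq CSeq1[of one sem] by blast
    next
      case False
      then obtain b \<mu>1 where r: "big_step one sem (\<mu>, s1) (b, \<mu>1)" unfolding nores_def by auto
      show ?thesis
      proof (cases b)
        case True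
        have "nores one sem (\<mu>1, s2)"
          using assms c Seq r True BSeq[of one sem \<mu> s1 \<mu>1 s2] unfolding nores_def by auto
        then show ?thesis using CSeq2[of one sem \<mu> s1 \<mu>1 s2] r True c Seq by auto
      next
        case False
        then show ?thesis using assms c Seq r BSeqBot[of one sem \<mu> s1 \<mu>1 s2] unfolding nores_def by auto
      qed
    qed
  next
    case (If e s1 s2)
    show ?thesis
    proof (cases "eval one sem \<mu> e = [one]")
      case True
      have "nores one sem (\<mu>, s1)" using assms c If True BIfT[of one sem] unfolding nores_def split_paired_Ex by blast
      then show ?thesis using CIfT[of one sem] True c If by blast
    next
      case False
      have "nores one sem (\<mu>, s2)" using assms c If False BIfF[of one sem] unfolding nores_def split_paired_Ex by blast
      then show ?thesis using CIfF[of one sem] False c If by blast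
    qed
  next
    case (While e a)
    show ?thesis
    proof (cases "eval one sem \<mu> e = [one]")
      case True
      have "nores one sem (\<mu>, Seq a (While e a))"
        using assms c While True BWhileT[of one sem] unfolding nores_def split_paired_Ex by blast
      then show ?thesis using CWhile[of one sem] True c While by blast
    next
      case False
      then show ?thesis using assms c While BWhileF[of one sem] unfolding nores_def split_paired_Ex by blast
    qed
  qed
qed

lemma infinite_path:
  assumes "nores one sem c0"
  shows "\<exists>f. f 0 = c0 \<and> (\<forall>n. tree_child one sem (f n) (f (Suc n)) \<and> nores one sem (f n))"
proof -
  define nx where "nx c = (SOME c'. tree_child one sem c c' \<and> nores one sem c')" for c
  define f where "f n = (nx ^^ n) c0" for n
  have nr: "nores one sem (f n)" for n
    by (induction n) (auto simp: f_def assms nx_def intro: someI2_ex[OF nores_step])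
  have "tree_child one sem (f n) (f (Suc n))" for n
    using someI_ex[OF nores_step[OF nr[of n]]] by (simp add: f_def nx_def)
  then show ?thesis using nr by (intro exI[of _ f]) (auto simp: f_def)
qed

lemma path_rtrancl:
  assumes "\<forall>n. tree_child one sem (f n) (f (Suc n))"
  shows "m \<le> n \<Longrightarrow> (tree_child one sem)\<^sup>*\<^sup>* (f m) (f n)"
proof (induction n)
  case 0 then show ?case by auto
next
  case (Suc n)
  then show ?case using assms
    by (metis le_Suc_eq rtranclp.rtrancl_into_rtrancl rtranclp.rtrancl_refl)
qed

lemma path_trancl:
  assumes "\<forall>n. tree_child one sem (f n) (f (Suc n))" "m < n"
  shows "(tree_child one sem)\<^sup>+\<^sup>+ (f m) (f n)"
proof -
  have "(tree_child one sem)\<^sup>*\<^sup>* (f (Suc m)) (f n)" using path_rtrancl[OF assms(1)] assms(2) by auto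
  then show ?thesis using assms(1) by (meson rtranclp_into_tranclp2)
qed


theorem part1:
  fixes zero one :: "'a::finite"
  assumes "P \<in> SAFE zero one ar sem" "P \<in> AP one sem"
  shows "P \<in> TERM_progs one sem"
  unfolding TERM_progs_def
proof (intro CollectI allI impI)
  fix ws :: "'a list list" assume len: "length ws = length (params P)"
  show "\<exists>w. computes one sem P ws w"
  proof (rule ccontr)
    assume nc: "\<not> (\<exists>w. computes one sem P ws w)"
    let ?c0 = "(init_store (params P) ws, body P)"
    have nr0: "nores one sem ?c0"
      using nc len unfolding nores_def computes_def by auto
    obtain \<Gamma> \<Delta> \<sigma>0 where safe: "safe_env zero one ar sem \<Delta>" and ty0: "sty ar \<Gamma> \<Delta> 0 0 (body P) \<sigma>0"
      using assms(1) unfolding SAFE_def by auto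
    obtain f where f0: "f 0 = ?c0" and fs: "\<forall>n. tree_child one sem (f n) (f (Suc n))"
      using infinite_path[OF nr0] by blast
    define V where "V = svars (body P)"
    have fcl: "snd (f n) \<in> cl (body P)" for n
    proof (induction n)
      case 0 then show ?case using f0 self_cl by auto
    next
      case (Suc n) then show ?case using tree_child_cl[of one sem "f n" "f (Suc n)"] fs by blast
    qed
    have fV: "svars (snd (f n)) \<subseteq> V" for n
    proof (induction n)
      case 0 then show ?case by (simp add: f0 V_def)
    next
      case (Suc n) then show ?case using tree_child_svars[of one sem "f n" "f (Suc n)"] fs by auto
    qed
    have ftyp: "\<exists>ti to \<sigma>. sty ar \<Gamma> \<Delta> ti to (snd (f n)) \<sigma>" for n
    proof (induction n)
      case 0 then show ?case using ty0 f0 by auto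
    next
      case (Suc n) then show ?case using child_typ[of one sem "f n" "f (Suc n)"] fs by blast
    qed
    define I where "I = {n. \<exists>e a. snd (f n) = While e a}"
    have infI: "infinite I"
    proof
      assume "finite I"
      then obtain N where N: "\<forall>n\<in>I. n < N" using finite_nat_set_iff_bounded by blast
      have "size (snd (f (N + k))) + k \<le> size (snd (f N))" for k
      proof (induction k)
        case 0 then show ?case by simp
      next
        case (Suc k)
        have "N + k \<notin> I" using N by fastforce
        then have "size (snd (f (Suc (N + k)))) < size (snd (f (N + k)))"
          using tree_child_size[of one sem "f (N+k)" "f (Suc (N+k))"] fs unfolding I_def by blast
        then show ?case using Suc by simp
      qed
      from this[of "Suc (size (snd (f N)))"] show False by simp
    qed
    have "finite ((snd \<circ> f) ` I)"
      by (rule finite_subset[OF _ finite_cl[of "body P"]]) (use fcl in auto)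
    from pigeonhole_infinite[OF infI this] obtain n0 where n0: "n0 \<in> I"
      and infJ0: "infinite {n\<in>I. (snd \<circ> f) n = (snd \<circ> f) n0}" by blast
    from n0 obtain e a where W: "snd (f n0) = While e a" unfolding I_def by blast
    obtain ti to \<sigma> where tyW: "sty ar \<Gamma> \<Delta> ti to (While e a) \<sigma>" using ftyp[of n0] W by auto
    have "\<exists>\<tau> T. 1 \<le> \<tau> \<and> \<tau> \<le> T \<and> ety ar \<Gamma> \<Delta> \<tau> T e \<tau> \<and> sty ar \<Gamma> \<Delta> \<tau> T a \<tau>"
      using sty_whileE[OF tyW refl] by auto
    then obtain \<tau> T where tT: "1 \<le> \<tau>" "\<tau> \<le> T" and te: "ety ar \<Gamma> \<Delta> \<tau> T e \<tau>"
      and ta: "sty ar \<Gamma> \<Delta> \<tau> T a \<tau>" by blast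
    have ctx0: "ctx ar \<Gamma> \<Delta> T \<tau> (While e a)"
      unfolding ctx_def using tT te ta by (intro exI[of _ \<tau>] conjI TWh) auto
    define B where "B = Suc (\<Sum>x\<in>V. length (fst (f n0) x))"
    define S where "S = {u::'a list. length u \<le> B}"
    have finS: "finite S"
      using finite_lists_length_le[OF finite_UNIV, of B] unfolding S_def by simp
    have clS: "closedS zero one S"
      unfolding closedS_def S_def B_def subword_def by auto
    have finV: "finite V" unfolding V_def by (rule finite_svars)
    have inv0: "Inv \<Gamma> V \<tau> S (fst (f n0))"
    proof -
      have "length (fst (f n0) x) \<le> (\<Sum>x\<in>V. length (fst (f n0) x))" if "x \<in> V" for x
        by (rule member_le_sum) (use that finV in auto)
      then show ?thesis unfolding Inv_def S_def B_def by (auto simp: le_SucI)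
    qed
    have invn: "ctx ar \<Gamma> \<Delta> T \<tau> (snd (f n)) \<and> Inv \<Gamma> V \<tau> S (fst (f n))" if "n0 \<le> n" for n
      using that
    proof (induction n rule: nat_induct_at_least)
      case base then show ?case using ctx0 inv0 W by simp
    next
      case (Suc n)
      then show ?case
        using child_ctx[of one sem "f n" "f (Suc n)" ar \<Gamma> \<Delta> T \<tau>]
          child_inv[of one sem "f n" "f (Suc n)" ar \<Gamma> \<Delta> T \<tau> zero S V] fs tT safe clS fV by blast
    qed
    define J where "J = {n\<in>I. (snd \<circ> f) n = (snd \<circ> f) n0} - {..<n0}"
    have infJ: "infinite J" unfolding J_def using infJ0 by simp
    have finU: "finite (U e)" using finite_subset[OF U_evars finite_evars] .
    obtain xs where xs: "set xs = U e" using finite_list[OF finU] by blast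
    define r where "r n = map (fst (f n)) xs" for n
    have UV: "U e \<subseteq> V" using U_evars[of e] fV[of n0] W by auto
    have Ulev: "\<tau> \<le> \<Gamma> x" if "x \<in> U e" for x
      using ety_U_level[OF te safe] tT that by auto
    have "r ` J \<subseteq> {ys. set ys \<subseteq> S \<and> length ys = length xs}"
    proof
      fix y assume "y \<in> r ` J"
      then obtain n where n: "n \<in> J" "y = r n" by blast
      then have "Inv \<Gamma> V \<tau> S (fst (f n))" using invn unfolding J_def by auto
      then show "y \<in> {ys. set ys \<subseteq> S \<and> length ys = length xs}"
        using n UV Ulev xs unfolding r_def Inv_def by auto
    qed
    then have "finite (r ` J)"
      using finite_subset finite_lists_length_eq[OF finS] by blast
    from pigeonhole_infinite[OF infJ this] obtain n1 where n1: "n1 \<in> J"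
      and inf1: "infinite {n\<in>J. r n = r n1}" by blast
    obtain n2 where n2: "n2 \<in> J" "r n2 = r n1" "n1 < n2"
      using inf1 unfolding infinite_nat_iff_unbounded by auto
    have W1: "snd (f n1) = While e a" and W2: "snd (f n2) = While e a"
      using n1 n2 W unfolding J_def by auto
    have agree: "\<forall>x\<in>U e. fst (f n1) x = fst (f n2) x"
      using n2(2) xs unfolding r_def by (simp add: map_eq_conv)
    have p1: "(tree_child one sem)\<^sup>*\<^sup>* (init_store (params P) ws, body P) (fst (f n1), While e a)"
      using path_rtrancl[OF fs, of 0 n1] f0 W1 by (metis prod.collapse zero_le)
    have p2: "(tree_child one sem)\<^sup>+\<^sup>+ (fst (f n1), While e a) (fst (f n2), While e a)"
      using path_trancl[OF fs n2(3)] W1 W2 by (metis prod.collapse)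
    show False using assms(2) p1 p2 agree unfolding AP_def by blast
  qed
qed


definition Lv :: "(var \<Rightarrow> nat) \<Rightarrow> var set \<Rightarrow> nat \<Rightarrow> 'a store \<Rightarrow> nat" where
  "Lv \<Gamma> V j \<mu> = Max (insert 0 ((\<lambda>x. length (\<mu> x)) ` {x\<in>V. j \<le> \<Gamma> x}))"

lemma Lv_ge: "finite V \<Longrightarrow> x \<in> V \<Longrightarrow> j \<le> \<Gamma> x \<Longrightarrow> length (\<mu> x) \<le> Lv \<Gamma> V j \<mu>"
  unfolding Lv_def by (rule Max_ge) auto

lemma Lv_le: "finite V \<Longrightarrow> (\<forall>x\<in>V. j \<le> \<Gamma> x \<longrightarrow> length (\<mu> x) \<le> B) \<Longrightarrow> Lv \<Gamma> V j \<mu> \<le> B"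
  unfolding Lv_def by (subst Max_le_iff) auto

lemma Lv_anti: "finite V \<Longrightarrow> j \<le> j' \<Longrightarrow> Lv \<Gamma> V j' \<mu> \<le> Lv \<Gamma> V j \<mu>"
  by (rule Lv_le) (auto intro: Lv_ge)

lemma unchanged1:
  assumes "big_step one sem c r"
  shows "x \<notin> svars (snd c) \<Longrightarrow> snd r x = fst c x"
  using assms by (induction rule: big_step.induct) auto

lemma unchanged2:
  assumes "big_step one sem c r"
  shows "sty ar \<Gamma> \<Delta> ti to (snd c) \<sigma> \<Longrightarrow> \<sigma> < \<Gamma> x \<Longrightarrow> snd r x = fst c x"
  using assms
proof (induction arbitrary: ti to \<sigma> rule: big_step.induct)
  case (BAssign \<mu> y e)
  then show ?case using sty_assignE[OF BAssign.prems(1)[simplified] refl] by auto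
next
  case (BSeqBot \<mu> s1 \<mu>1 s2)
  then show ?case using sty_seqE[OF BSeqBot.prems(1)[simplified] refl] by fastforce
next
  case (BSeq \<mu> s1 \<mu>1 s2 b \<mu>2)
  obtain \<sigma>' where "\<sigma>' \<le> \<sigma>" "sty ar \<Gamma> \<Delta> ti to s1 \<sigma>'" "sty ar \<Gamma> \<Delta> ti to s2 \<sigma>'"
    using sty_seqE[OF BSeq.prems(1)[simplified] refl] by auto
  then show ?case using BSeq by fastforce
next
  case (BIfT \<mu> e s1 b \<mu>' s2)
  then show ?case using sty_ifE[OF BIfT.prems(1)[simplified] refl] by fastforce
next
  case (BIfF \<mu> e s2 b \<mu>' s1)
  then show ?case using sty_ifE[OF BIfF.prems(1)[simplified] refl] by fastforce
next
  case (BWhileT \<mu> e s b \<mu>')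
  have "\<exists>ti' to' \<tau>'. \<tau>' \<le> \<sigma> \<and> sty ar \<Gamma> \<Delta> ti' to' (Seq s (While e s)) \<tau>'"
  proof -
    from sty_whileE[OF BWhileT.prems(1)[simplified] refl] show ?thesis
    proof (elim disjE exE conjE)
      fix \<tau>' assume t: "\<tau>' \<le> \<sigma>" "1 \<le> \<tau>'" "\<tau>' \<le> to" "ety ar \<Gamma> \<Delta> \<tau>' to e \<tau>'" "sty ar \<Gamma> \<Delta> \<tau>' to s \<tau>'"
      have "sty ar \<Gamma> \<Delta> \<tau>' to (Seq s (While e s)) \<tau>'" using t by (intro TSeq TWh) auto
      then show ?thesis using t by blast
    next
      fix \<tau>' assume t: "\<tau>' \<le> \<sigma>" "1 \<le> \<tau>'" "ety ar \<Gamma> \<Delta> \<tau>' \<tau>' e \<tau>'" "sty ar \<Gamma> \<Delta> \<tau>' \<tau>' s \<tau>'"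
      have "sty ar \<Gamma> \<Delta> \<tau>' \<tau>' (Seq s (While e s)) \<tau>'" using t by (intro TSeq TWh) auto
      then show ?thesis using t by blast
    qed
  qed
  then show ?case using BWhileT by fastforce
qed auto

lemma safe_op2:
  assumes "safe_env zero one ar sem \<Delta>" "\<Delta> op = Some D" "ts \<in> D ti to" "to \<noteq> 0"
  shows "op_neutral zero one ar sem op \<or> op_positive ar sem op"
  using assms unfolding safe_env_def by metis

definition cpos :: "('op \<Rightarrow> nat) \<Rightarrow> ('op \<Rightarrow> 'a word list \<Rightarrow> 'a word) \<Rightarrow> 'op \<Rightarrow> nat" where
  "cpos ar sem op = (SOME c. \<forall>ws. length ws = ar op \<longrightarrow> length (sem op ws) \<le> maxlen ws + c)"

lemma cpos: "op_positive ar sem op \<Longrightarrow> length ws = ar op \<Longrightarrow> length (sem op ws) \<le> maxlen ws + cpos ar sem op"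
proof -
  assume a: "op_positive ar sem op" "length ws = ar op"
  let ?P = "\<lambda>c. \<forall>ws. length ws = ar op \<longrightarrow> length (sem op ws) \<le> maxlen ws + c"
  have "?P (SOME c. ?P c)" using a(1) unfolding op_positive_def by (rule someI_ex)
  then show ?thesis using a(2) unfolding cpos_def by blast
qed

primrec Acost :: "('op \<Rightarrow> nat) \<Rightarrow> 'op expr \<Rightarrow> nat" where
  "Acost cp (Var x) = 0"
| "Acost cp (Op op es) = cp op + 1 + sum_list (map (Acost cp) es)"
| "Acost cp (Declass e1 e2) = Acost cp e2"

lemma maxlen_le: "(\<forall>w\<in>set ws. length w \<le> B) \<Longrightarrow> maxlen ws \<le> B"
  unfolding maxlen_def by (subst Max_le_iff) auto

lemma maxlen_ge: "w \<in> set ws \<Longrightarrow> length w \<le> maxlen ws"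
  unfolding maxlen_def by (rule Max_ge) auto

lemma subword_len: "subword u v \<Longrightarrow> length u \<le> length v"
  unfolding subword_def by auto

lemma ety_len:
  assumes "ety ar \<Gamma> \<Delta> ti to e \<rho>" "safe_env zero one ar sem \<Delta>" "to \<noteq> 0" "finite V"
  shows "evars e \<subseteq> V \<Longrightarrow> length (eval one sem \<mu> e) \<le> Lv \<Gamma> V \<rho> \<mu> + Acost (cpos ar sem) e"
  using assms
proof (induction rule: ety.induct)
  case (TVar x \<tau> ti to)
  then show ?case using Lv_ge[of V x \<tau> \<Gamma> \<mu>] by simp
next
  case (TOp op D ts ti to es)
  have sop: "length ts = Suc (ar op) \<and> (\<forall>i < ar op. ts ! ar op \<le> ts ! i) \<and>
         (op_neutral zero one ar sem op \<or> ts ! ar op < ti \<or> ts ! ar op = 0)"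
    using safe_op[OF TOp.prems(2) TOp.hyps(1,2) TOp.prems(3)] .
  let ?ws = "map (eval one sem \<mu>) es"
  let ?A = "sum_list (map (Acost (cpos ar sem)) es)"
  have lws: "length ?ws = ar op" using TOp.hyps(3) by simp
  have each: "length (?ws ! i) \<le> Lv \<Gamma> V (ts ! length es) \<mu> + ?A" if i: "i < length es" for i
  proof -
    have ev: "evars (es ! i) \<subseteq> V" using TOp.prems(1) i nth_mem by fastforce
    have "length (?ws ! i) \<le> Lv \<Gamma> V (ts ! i) \<mu> + Acost (cpos ar sem) (es ! i)"
      using TOp.IH i ev TOp.prems by auto
    moreover have "Lv \<Gamma> V (ts ! i) \<mu> \<le> Lv \<Gamma> V (ts ! length es) \<mu>"
    proof -
      have "ts ! length es \<le> ts ! i" using sop TOp.hyps(3) i by auto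
      then show ?thesis using Lv_anti[OF TOp.prems(4)] by blast
    qed
    moreover have "Acost (cpos ar sem) (es ! i) \<le> ?A"
      using i by (intro member_le_sum_list) auto
    ultimately show ?thesis by linarith
  qed
  have ml: "maxlen ?ws \<le> Lv \<Gamma> V (ts ! length es) \<mu> + ?A"
    using each by (intro maxlen_le) (auto simp: in_set_conv_nth)
  have "op_neutral zero one ar sem op \<or> op_positive ar sem op"
    using safe_op2[OF TOp.prems(2) TOp.hyps(1,2) TOp.prems(3)] .
  then have "length (sem op ?ws) \<le> Lv \<Gamma> V (ts ! length es) \<mu> + ?A + cpos ar sem op + 1"
  proof
    assume "op_neutral zero one ar sem op"
    then show ?thesis unfolding op_neutral_def
    proof
      assume "\<forall>ws. length ws = ar op \<longrightarrow> sem op ws \<in> {[zero], [one]}"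
      then have "sem op ?ws \<in> {[zero], [one]}" using lws by blast
      then show ?thesis by auto
    next
      assume "\<exists>i<ar op. \<forall>ws. length ws = ar op \<longrightarrow> subword (sem op ws) (ws ! i)"
      then obtain i where "i < ar op" "subword (sem op ?ws) (?ws ! i)" using lws by blast
      then show ?thesis using each[of i] TOp.hyps(3) subword_len by fastforce
    qed
  next
    assume "op_positive ar sem op"
    then show ?thesis using cpos[of ar sem op ?ws] lws ml by fastforce
  qed
  then show ?case by simp
next
  case (TDcl ti to e1 \<tau>1 e2 \<tau>)
  have "length (eval one sem \<mu> e2) \<le> Lv \<Gamma> V to \<mu> + Acost (cpos ar sem) e2" using TDcl by auto
  moreover have "Lv \<Gamma> V to \<mu> \<le> Lv \<Gamma> V \<tau> \<mu>" using Lv_anti[OF TDcl.prems(4)] TDcl.hyps by auto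
  ultimately show ?case by simp
qed



section \<open>Subwords and the value set\<close>

lemma subword_refl: "subword u u" unfolding subword_def by (metis append.left_neutral append_Nil2)

lemma subword_trans: "subword u v \<Longrightarrow> subword v w \<Longrightarrow> subword u w"
  unfolding subword_def by (metis append.assoc)

lemma subword_single: "subword u [a] \<Longrightarrow> u = [] \<or> u = [a]"
  unfolding subword_def by (auto simp: append_eq_Cons_conv Cons_eq_append_conv)

lemma subword_rep: "subword u (replicate k a) \<Longrightarrow> u = replicate (length u) a \<and> length u \<le> k"
proof -
  assume "subword u (replicate k a)"
  then obtain p q where pq: "replicate k a = p @ u @ q" unfolding subword_def by blast
  then have "set u \<subseteq> set (replicate k a)" by (metis Un_upper1 Un_upper2 set_append subset_trans)
  then have "set u \<subseteq> {a}" by (auto simp: set_replicate_conv_if split: if_splits)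
  then have "u = replicate (length u) a" by (metis replicate_length_same singletonD subsetD)
  moreover have "length u \<le> k" using arg_cong[OF pq, of length] by simp
  ultimately show ?thesis by blast
qed

lemma subword_rep': "subword u (replicate k a) \<Longrightarrow> \<exists>n\<le>k. u = replicate n a"
proof -
  assume h: "subword u (replicate k a)"
  have "length u \<le> k \<and> u = replicate (length u) a" using subword_rep[OF h] by (simp only: conj_commute)
  then show ?thesis by (rule exI)
qed

lemma subword_take_drop: "subword u w \<Longrightarrow> \<exists>i j. i \<le> length w \<and> j \<le> length w \<and> u = take j (drop i w)"
proof -
  assume "subword u w"
  then obtain p q where w: "w = p @ u @ q" unfolding subword_def by blast
  show ?thesis by (rule exI[of _ "length p"], rule exI[of _ "length u"]) (simp add: w)
qed

lemma subwords_sub: "{u. subword u w} \<subseteq> (\<lambda>(i, j). take j (drop i w)) ` ({..length w} \<times> {..length w})"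
  using subword_take_drop by fastforce

lemma finite_subwords: "finite {u. subword u w}"
  by (rule finite_subset[OF subwords_sub]) auto

lemma card_subwords: "card {u. subword u w} \<le> (length w + 1) ^ 2"
proof -
  have "card {u. subword u w} \<le> card ((\<lambda>(i, j). take j (drop i w)) ` ({..length w} \<times> {..length w}))"
    by (rule card_mono[OF _ subwords_sub]) auto
  also have "\<dots> \<le> card ({..length w} \<times> {..length w})" by (rule card_image_le) auto
  also have "\<dots> = (length w + 1) ^ 2" by (simp add: card_cartesian_product power2_eq_square)
  finally show ?thesis .
qed

definition Sset :: "'a \<Rightarrow> 'a \<Rightarrow> (var \<Rightarrow> nat) \<Rightarrow> var set \<Rightarrow> nat \<Rightarrow> 'a store \<Rightarrow> 'a word set" where
  "Sset zero one \<Gamma> V \<tau> \<mu>0 = (\<Union>x\<in>{x\<in>V. \<tau> \<le> \<Gamma> x}. {u. subword u (\<mu>0 x)}) \<union> {[zero], [one]}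
     \<union> (\<lambda>k. replicate k one) ` {..Lv \<Gamma> V \<tau> \<mu>0}"

lemma Sset_len:
  assumes "finite V" "u \<in> Sset zero one \<Gamma> V \<tau> \<mu>0"
  shows "length u \<le> max 1 (Lv \<Gamma> V \<tau> \<mu>0)"
proof -
  have "length u \<le> Lv \<Gamma> V \<tau> \<mu>0 \<or> length u \<le> 1"
    using assms(2) unfolding Sset_def
  proof (elim UnE)
    assume "u \<in> (\<Union>x\<in>{x\<in>V. \<tau> \<le> \<Gamma> x}. {u. subword u (\<mu>0 x)})"
    then obtain x where "x \<in> V" "\<tau> \<le> \<Gamma> x" "subword u (\<mu>0 x)" by blast
    then show ?thesis using Lv_ge[OF assms(1), of x \<tau> \<Gamma> \<mu>0] subword_len[of u "\<mu>0 x"] by linarith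
  qed auto
  then show ?thesis by linarith
qed

lemma Sset_memI1: "x \<in> V \<Longrightarrow> \<tau> \<le> \<Gamma> x \<Longrightarrow> subword u (\<mu>0 x) \<Longrightarrow> u \<in> Sset zero one \<Gamma> V \<tau> \<mu>0"
  unfolding Sset_def by blast
lemma Sset_memI2: "u = [zero] \<or> u = [one] \<Longrightarrow> u \<in> Sset zero one \<Gamma> V \<tau> \<mu>0"
  unfolding Sset_def by blast
lemma Sset_memI3: "k \<le> Lv \<Gamma> V \<tau> \<mu>0 \<Longrightarrow> replicate k one \<in> Sset zero one \<Gamma> V \<tau> \<mu>0"
  unfolding Sset_def by blast
lemma Sset_memE:
  assumes "u \<in> Sset zero one \<Gamma> V \<tau> \<mu>0"
  obtains x where "x \<in> V" "\<tau> \<le> \<Gamma> x" "subword u (\<mu>0 x)"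
  | "u = [zero] \<or> u = [one]"
  | k where "k \<le> Lv \<Gamma> V \<tau> \<mu>0" "u = replicate k one"
  using assms unfolding Sset_def by blast

lemma Sset_closed:
  assumes "finite V"
  shows "closedS zero one (Sset zero one \<Gamma> V \<tau> \<mu>0)"
proof -
  let ?S = "Sset zero one \<Gamma> V \<tau> \<mu>0"
  let ?B = "Lv \<Gamma> V \<tau> \<mu>0"
  have emp: "[] \<in> ?S" using Sset_memI3[of 0] by simp
  have c1: "u \<in> ?S" if v: "v \<in> ?S" and u: "subword u v" for u v
    using v
  proof (cases rule: Sset_memE)
    case (1 x)
    show ?thesis by (rule Sset_memI1[of x V \<tau> \<Gamma> u \<mu>0 zero one, OF 1(1,2) subword_trans[OF u 1(3)]])
  next
    case 2
    have "u = [] \<or> u = v"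
    proof (cases "v = [zero]")
      case True then show ?thesis using subword_single[of u zero] u by simp
    next
      case False then have "v = [one]" using 2 by simp
      then show ?thesis using subword_single[of u one] u by simp
    qed
    then show ?thesis using emp v by (elim disjE) simp_all
  next
    case (3 k)
    have "subword u (replicate k one)" using u 3(2) by (simp only:)
    from subword_rep'[OF this] obtain n where n: "n \<le> k" "u = replicate n one" by blast
    have "n \<le> ?B" using n(1) 3(1) by linarith
    then have "replicate n one \<in> ?S" by (rule Sset_memI3)
    then show ?thesis using n(2) by (simp only:)
  qed
  have c2: "replicate k one \<in> ?S" if v: "v \<in> ?S" and k: "k \<le> length v" for v k
  proof (cases "k \<le> ?B")
    case True then show ?thesis by (rule Sset_memI3)
  next
    case False
    then have "length v \<le> 1" using Sset_len[OF assms v] k by linarith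
    then have "k = 0 \<or> k = 1" using k by linarith
    then show ?thesis using emp Sset_memI2[of "[one]"] by auto
  qed
  show ?thesis unfolding closedS_def
  proof (intro conjI ballI allI impI)
    show "[zero] \<in> ?S" by (rule Sset_memI2) simp
    show "[one] \<in> ?S" by (rule Sset_memI2) simp
  next
    fix v u assume "v \<in> ?S" "subword u v" then show "u \<in> ?S" by (rule c1)
  next
    fix v k assume "v \<in> ?S" "k \<le> length v" then show "replicate k one \<in> ?S" by (rule c2)
  qed
qed

lemma Sset_inv0:
  "Inv \<Gamma> V \<tau> (Sset zero one \<Gamma> V \<tau> \<mu>0) \<mu>0"
  unfolding Inv_def by (intro ballI impI, rule Sset_memI1, assumption+, rule subword_refl)

lemma Sset_finite_card:
  assumes "finite V"
  shows "finite (Sset zero one \<Gamma> V \<tau> \<mu>0) \<and>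
    card (Sset zero one \<Gamma> V \<tau> \<mu>0) \<le> card V * (Lv \<Gamma> V \<tau> \<mu>0 + 1) ^ 2 + Lv \<Gamma> V \<tau> \<mu>0 + 3"
proof -
  let ?B = "Lv \<Gamma> V \<tau> \<mu>0"
  let ?V' = "{x\<in>V. \<tau> \<le> \<Gamma> x}"
  let ?X = "\<Union>x\<in>?V'. {u. subword u (\<mu>0 x)}"
  have fV': "finite ?V'" using assms by simp
  have fX: "finite ?X" using fV' finite_subwords by blast
  have "card ?X \<le> (\<Sum>x\<in>?V'. card {u. subword u (\<mu>0 x)})" by (rule card_UN_le[OF fV'])
  also have "\<dots> \<le> (\<Sum>x\<in>?V'. (?B + 1) ^ 2)"
  proof (rule sum_mono)
    fix x assume "x \<in> ?V'"
    then have "length (\<mu>0 x) \<le> ?B" using Lv_ge[OF assms] by blast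
    then have "(length (\<mu>0 x) + 1) ^ 2 \<le> (?B + 1) ^ 2" by (simp add: power_mono)
    then show "card {u. subword u (\<mu>0 x)} \<le> (?B + 1) ^ 2" using card_subwords le_trans by blast
  qed
  also have "\<dots> = card ?V' * (?B + 1) ^ 2" by simp
  also have "\<dots> \<le> card V * (?B + 1) ^ 2" using card_mono[OF assms, of ?V'] by (simp add: mult_le_mono1)
  finally have cX: "card ?X \<le> card V * (?B + 1) ^ 2" .
  have cR: "card ((\<lambda>k. replicate k one) ` {..?B}) \<le> ?B + 1"
    using card_image_le[of "{..?B}" "\<lambda>k. replicate k one"] by simp
  have "card (Sset zero one \<Gamma> V \<tau> \<mu>0) \<le> card (?X \<union> {[zero], [one]}) + card ((\<lambda>k. replicate k one) ` {..?B})"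
    unfolding Sset_def by (rule card_Un_le)
  also have "card (?X \<union> {[zero], [one]}) \<le> card ?X + card {[zero], [one]}" by (rule card_Un_le)
  also have "card {[zero], [one]} \<le> 2" by (simp add: card_insert_le_m1)
  finally have "card (Sset zero one \<Gamma> V \<tau> \<mu>0) \<le> card V * (?B + 1) ^ 2 + ?B + 3" using cX cR by linarith
  moreover have "finite (Sset zero one \<Gamma> V \<tau> \<mu>0)" unfolding Sset_def using fX by blast
  ultimately show ?thesis by blast
qed


definition runR :: "'a \<Rightarrow> ('op \<Rightarrow> 'a word list \<Rightarrow> 'a word) \<Rightarrow> 'op expr \<Rightarrow> 'op stmt \<Rightarrow> 'a store \<Rightarrow> 'a store \<Rightarrow> bool" where
  "runR one sem e a \<mu> \<mu>' \<longleftrightarrow> (\<exists>n hs. hs 0 = \<mu> \<and>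
     (\<forall>i<n. eval one sem (hs i) e = [one] \<and> big_step one sem (hs i, a) (True, hs (Suc i))) \<and>
     ((eval one sem (hs n) e \<noteq> [one] \<and> \<mu>' = hs n) \<or>
      (eval one sem (hs n) e = [one] \<and> big_step one sem (hs n, a) (False, \<mu>'))))"

lemma runR_stop: "eval one sem \<mu> e \<noteq> [one] \<Longrightarrow> runR one sem e a \<mu> \<mu>"
  unfolding runR_def by (rule exI[of _ 0], rule exI[of _ "\<lambda>_. \<mu>"]) simp

lemma runR_brk: "eval one sem \<mu> e = [one] \<Longrightarrow> big_step one sem (\<mu>, a) (False, \<mu>') \<Longrightarrow> runR one sem e a \<mu> \<mu>'"
  unfolding runR_def by (rule exI[of _ 0], rule exI[of _ "\<lambda>_. \<mu>"]) simp

lemma runR_cons: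
  assumes "eval one sem \<mu> e = [one]" "big_step one sem (\<mu>, a) (True, \<mu>1)" "runR one sem e a \<mu>1 \<mu>'"
  shows "runR one sem e a \<mu> \<mu>'"
proof -
  obtain n hs where h: "hs 0 = \<mu>1"
    "\<forall>i<n. eval one sem (hs i) e = [one] \<and> big_step one sem (hs i, a) (True, hs (Suc i))"
    "(eval one sem (hs n) e \<noteq> [one] \<and> \<mu>' = hs n) \<or>
      (eval one sem (hs n) e = [one] \<and> big_step one sem (hs n, a) (False, \<mu>'))"
    using assms(3) unfolding runR_def by blast
  define hs' where "hs' i = (if i = 0 then \<mu> else hs (i - 1))" for i
  have "\<forall>i<Suc n. eval one sem (hs' i) e = [one] \<and> big_step one sem (hs' i, a) (True, hs' (Suc i))"
  proof (intro allI impI)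
    fix i assume "i < Suc n"
    then show "eval one sem (hs' i) e = [one] \<and> big_step one sem (hs' i, a) (True, hs' (Suc i))"
      using h assms by (cases i) (auto simp: hs'_def)
  qed
  moreover have "hs' (Suc n) = hs n" by (simp add: hs'_def)
  ultimately show ?thesis unfolding runR_def using h(3)
    by (intro exI[of _ "Suc n"] exI[of _ hs']) (simp add: hs'_def)
qed

lemma while_run:
  assumes "big_step one sem c r"
  shows "(\<forall>\<mu> e a. c = (\<mu>, While e a) \<longrightarrow> runR one sem e a \<mu> (snd r)) \<and>
    (\<forall>\<mu> e a. c = (\<mu>, Seq a (While e a)) \<longrightarrow> big_step one sem (\<mu>, a) (False, snd r) \<or>
        (\<exists>\<mu>1. big_step one sem (\<mu>, a) (True, \<mu>1) \<and> runR one sem e a \<mu>1 (snd r)))"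
  using assms
proof (induction rule: big_step.induct)
  case (BSeq \<mu> s1 \<mu>1 s2 b \<mu>2)
  then show ?case by auto
next
  case (BWhileF \<mu> e s)
  then show ?case using runR_stop by auto
next
  case (BWhileT \<mu> e s b \<mu>')
  then show ?case using runR_brk[of one sem \<mu> e s \<mu>'] runR_cons[of one sem \<mu> e s] by auto
qed auto

lemma pm_power: "pm f \<Longrightarrow> pm (\<lambda>y. f y ^ n)"
proof (induction n)
  case 0 then show ?case using pm_const[of 1] by simp
next
  case (Suc n) then show ?case using pm_mult[of f "\<lambda>y. f y ^ n"] by simp
qed

locale qctx =
  fixes zero one :: "'a::countable" and ar :: "'op \<Rightarrow> nat" and sem :: "'op \<Rightarrow> 'a word list \<Rightarrow> 'a word"
    and \<Gamma> :: "var \<Rightarrow> nat" and \<Delta> :: "'op openv" and bodyQ :: "'op stmt"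
  assumes safe: "safe_env zero one ar sem \<Delta>"
    and ap: "\<not> (\<exists>\<mu> \<mu>' \<mu>'' e s. (tree_child one sem)\<^sup>*\<^sup>* (\<mu>, bodyQ) (\<mu>', While e s) \<and>
      (tree_child one sem)\<^sup>+\<^sup>+ (\<mu>', While e s) (\<mu>'', While e s) \<and> (\<forall>x \<in> U e. \<mu>' x = \<mu>'' x))"
begin

abbreviation "V \<equiv> svars bodyQ"
abbreviation "L j \<mu> \<equiv> Lv \<Gamma> V j \<mu>"
abbreviation "rch c \<equiv> reach one sem bodyQ c"

lemma finV: "finite V" by (rule finite_svars)

definition Cin :: "'op stmt \<Rightarrow> bool" where
  "Cin s \<longleftrightarrow> (\<exists>p. pm p \<and> (\<forall>\<mu> b \<mu>'. rch (\<mu>, s) \<longrightarrow> big_step one sem (\<mu>, s) (b, \<mu>') \<longrightarrow>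
      (\<forall>j. L j \<mu>' \<le> L j \<mu> + p (L (Suc j) \<mu>))))"

lemma rch_seq1: "rch (\<mu>, Seq s1 s2) \<Longrightarrow> rch (\<mu>, s1)"
  by (erule reach_step) (rule CSeq1)
lemma rch_seq2: "rch (\<mu>, Seq s1 s2) \<Longrightarrow> big_step one sem (\<mu>, s1) (True, \<mu>1) \<Longrightarrow> rch (\<mu>1, s2)"
  by (erule reach_step) (erule CSeq2)
lemma rch_ifT: "rch (\<mu>, If e s1 s2) \<Longrightarrow> eval one sem \<mu> e = [one] \<Longrightarrow> rch (\<mu>, s1)"
  by (erule reach_step) (erule CIfT)
lemma rch_ifF: "rch (\<mu>, If e s1 s2) \<Longrightarrow> eval one sem \<mu> e \<noteq> [one] \<Longrightarrow> rch (\<mu>, s2)"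
  by (erule reach_step) (erule CIfF)
lemma rch_while: "rch (\<mu>, While e s) \<Longrightarrow> eval one sem \<mu> e = [one] \<Longrightarrow> rch (\<mu>, Seq s (While e s))"
  by (erule reach_step) (erule CWhile)

lemma rch_V: "rch (\<mu>, s) \<Longrightarrow> svars s \<subseteq> V"
  using reach_svars by fastforce

inductive_cases BSkipE: "big_step one sem (\<mu>, Skip) r"
inductive_cases BAssignE: "big_step one sem (\<mu>, Assign x e) r"
inductive_cases BSeqE: "big_step one sem (\<mu>, Seq s1 s2) r"
inductive_cases BIfE: "big_step one sem (\<mu>, If e s1 s2) r"
inductive_cases BBreakE: "big_step one sem (\<mu>, Break e) r"

lemma seq_inv: "big_step one sem (\<mu>, Seq s1 s2) (b, \<mu>') \<Longrightarrow>
  big_step one sem (\<mu>, s1) (False, \<mu>') \<or> (\<exists>\<mu>1. big_step one sem (\<mu>, s1) (True, \<mu>1) \<and> big_step one sem (\<mu>1, s2) (b, \<mu>'))"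
  by (auto elim: BSeqE)
lemma if_inv: "big_step one sem (\<mu>, If e s1 s2) (b, \<mu>') \<Longrightarrow>
  (eval one sem \<mu> e = [one] \<and> big_step one sem (\<mu>, s1) (b, \<mu>')) \<or> (eval one sem \<mu> e \<noteq> [one] \<and> big_step one sem (\<mu>, s2) (b, \<mu>'))"
  by (auto elim: BIfE)

lemma pm_zero: "pm (\<lambda>y. 0)" using pm_const[of 0] .

lemma cin_skip: "Cin Skip"
  unfolding Cin_def by (rule exI[of _ "\<lambda>y. 0"]) (auto elim: BSkipE simp: pm_zero)

lemma cin_break: "Cin (Break e)"
  unfolding Cin_def by (rule exI[of _ "\<lambda>y. 0"]) (auto elim: BBreakE simp: pm_zero)

lemma cin_assign:
  assumes "1 \<le> T" "sty ar \<Gamma> \<Delta> ti T (Assign x e) \<sigma>"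
  shows "Cin (Assign x e)"
proof -
  obtain \<tau>2 where t: "ety ar \<Gamma> \<Delta> ti T e \<tau>2" "\<Gamma> x \<le> \<tau>2"
    using sty_assignE[OF assms(2) refl] assms(1) by auto
  let ?A = "Acost (cpos ar sem) e"
  have "\<forall>j. L j \<mu>' \<le> L j \<mu> + ?A" if r: "rch (\<mu>, Assign x e)" "big_step one sem (\<mu>, Assign x e) (b, \<mu>')"
    for \<mu> b \<mu>'
  proof
    fix j
    have \<mu>': "\<mu>' = \<mu>(x := eval one sem \<mu> e)" using r(2) by (auto elim: BAssignE)
    have ev: "evars e \<subseteq> V" using rch_V[OF r(1)] by auto
    have len: "length (eval one sem \<mu> e) \<le> L \<tau>2 \<mu> + ?A"
      using ety_len[OF t(1) safe _ finV ev] assms(1) by auto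
    show "L j \<mu>' \<le> L j \<mu> + ?A"
    proof (rule Lv_le[OF finV], intro ballI impI)
      fix y assume y: "y \<in> V" "j \<le> \<Gamma> y"
      show "length (\<mu>' y) \<le> L j \<mu> + ?A"
      proof (cases "y = x")
        case True
        have "j \<le> \<tau>2" using y t(2) True by simp
        then have "L \<tau>2 \<mu> \<le> L j \<mu>" using Lv_anti[OF finV] by blast
        then show ?thesis using len True \<mu>' by simp
      next
        case False
        then show ?thesis using Lv_ge[of V y j \<Gamma> \<mu>, OF finV y] \<mu>' by simp
      qed
    qed
  qed
  then show ?thesis unfolding Cin_def using pm_const[of ?A] by blast
qed

lemma cin_seq:
  assumes "Cin s1" "Cin s2"
  shows "Cin (Seq s1 s2)"
proof -
  obtain pa where pa: "pm pa" "\<And>\<mu> b \<mu>'. rch (\<mu>, s1) \<Longrightarrow> big_step one sem (\<mu>, s1) (b, \<mu>') \<Longrightarrow>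
      (\<forall>j. L j \<mu>' \<le> L j \<mu> + pa (L (Suc j) \<mu>))" using assms(1) unfolding Cin_def by blast
  obtain pb where pb: "pm pb" "\<And>\<mu> b \<mu>'. rch (\<mu>, s2) \<Longrightarrow> big_step one sem (\<mu>, s2) (b, \<mu>') \<Longrightarrow>
      (\<forall>j. L j \<mu>' \<le> L j \<mu> + pb (L (Suc j) \<mu>))" using assms(2) unfolding Cin_def by blast
  let ?p = "\<lambda>y. pa y + pb (y + pa y)"
  have pmp: "pm ?p" using pm_add[OF pa(1) pm_comp[OF pb(1) pm_add[OF pm_id pa(1)]]] .
  have "\<forall>j. L j \<mu>' \<le> L j \<mu> + ?p (L (Suc j) \<mu>)"
    if r: "rch (\<mu>, Seq s1 s2)" "big_step one sem (\<mu>, Seq s1 s2) (b, \<mu>')" for \<mu> b \<mu>'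
    using seq_inv[OF r(2)]
  proof (elim disjE exE conjE)
    assume "big_step one sem (\<mu>, s1) (False, \<mu>')"
    from pa(2)[OF rch_seq1[OF r(1)] this] have h: "\<forall>j. L j \<mu>' \<le> L j \<mu> + pa (L (Suc j) \<mu>)" .
    show ?thesis
    proof
      fix j show "L j \<mu>' \<le> L j \<mu> + ?p (L (Suc j) \<mu>)" using h[rule_format, of j] by linarith
    qed
  next
    fix \<mu>1 assume 2: "big_step one sem (\<mu>, s1) (True, \<mu>1)" "big_step one sem (\<mu>1, s2) (b, \<mu>')"
    have h1: "\<forall>j. L j \<mu>1 \<le> L j \<mu> + pa (L (Suc j) \<mu>)" using pa(2)[OF rch_seq1[OF r(1)] 2(1)] .
    have h2: "\<forall>j. L j \<mu>' \<le> L j \<mu>1 + pb (L (Suc j) \<mu>1)" using pb(2)[OF rch_seq2[OF r(1) 2(1)] 2(2)] by simp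
    show ?thesis
    proof
      fix j
      let ?y = "L (Suc j) \<mu>"
      have "L (Suc (Suc j)) \<mu> \<le> ?y" using Lv_anti[OF finV, of "Suc j" "Suc (Suc j)"] by simp
      then have "pa (L (Suc (Suc j)) \<mu>) \<le> pa ?y" using pm_mono[OF pa(1)] by blast
      then have "L (Suc j) \<mu>1 \<le> ?y + pa ?y" using h1[rule_format, of "Suc j"] by linarith
      then have "pb (L (Suc j) \<mu>1) \<le> pb (?y + pa ?y)" using pm_mono[OF pb(1)] by blast
      then show "L j \<mu>' \<le> L j \<mu> + ?p ?y" using h1[rule_format, of j] h2[rule_format, of j] by linarith
    qed
  qed
  then show ?thesis unfolding Cin_def using pmp by blast
qed

lemma cin_if:
  assumes "Cin s1" "Cin s2"
  shows "Cin (If e s1 s2)"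
proof -
  obtain pa where pa: "pm pa" "\<And>\<mu> b \<mu>'. rch (\<mu>, s1) \<Longrightarrow> big_step one sem (\<mu>, s1) (b, \<mu>') \<Longrightarrow>
      (\<forall>j. L j \<mu>' \<le> L j \<mu> + pa (L (Suc j) \<mu>))" using assms(1) unfolding Cin_def by blast
  obtain pb where pb: "pm pb" "\<And>\<mu> b \<mu>'. rch (\<mu>, s2) \<Longrightarrow> big_step one sem (\<mu>, s2) (b, \<mu>') \<Longrightarrow>
      (\<forall>j. L j \<mu>' \<le> L j \<mu> + pb (L (Suc j) \<mu>))" using assms(2) unfolding Cin_def by blast
  have "\<forall>j. L j \<mu>' \<le> L j \<mu> + (pa (L (Suc j) \<mu>) + pb (L (Suc j) \<mu>))"
    if r: "rch (\<mu>, If e s1 s2)" "big_step one sem (\<mu>, If e s1 s2) (b, \<mu>')" for \<mu> b \<mu>'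
    using if_inv[OF r(2)]
  proof (elim disjE conjE)
    assume a: "eval one sem \<mu> e = [one]" "big_step one sem (\<mu>, s1) (b, \<mu>')"
    from pa(2)[OF rch_ifT[OF r(1) a(1)] a(2)] have h: "\<forall>j. L j \<mu>' \<le> L j \<mu> + pa (L (Suc j) \<mu>)" .
    show ?thesis
    proof
      fix j show "L j \<mu>' \<le> L j \<mu> + (pa (L (Suc j) \<mu>) + pb (L (Suc j) \<mu>))" using h[rule_format, of j] by linarith
    qed
  next
    assume a: "eval one sem \<mu> e \<noteq> [one]" "big_step one sem (\<mu>, s2) (b, \<mu>')"
    from pb(2)[OF rch_ifF[OF r(1) a(1)] a(2)] have h: "\<forall>j. L j \<mu>' \<le> L j \<mu> + pb (L (Suc j) \<mu>)" .
    show ?thesis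
    proof
      fix j show "L j \<mu>' \<le> L j \<mu> + (pa (L (Suc j) \<mu>) + pb (L (Suc j) \<mu>))" using h[rule_format, of j] by linarith
    qed
  qed
  then show ?thesis unfolding Cin_def using pm_add[OF pa(1) pb(1)] by blast
qed


lemma cin_while:
  assumes T1: "1 \<le> T" and ty: "sty ar \<Gamma> \<Delta> ti T (While e a) \<sigma>"
    and IH: "\<And>ti' \<sigma>'. sty ar \<Gamma> \<Delta> ti' T a \<sigma>' \<Longrightarrow> Cin a"
  shows "Cin (While e a)"
proof -
  obtain \<tau>' where t: "1 \<le> \<tau>'" "\<tau>' \<le> T" "ety ar \<Gamma> \<Delta> \<tau>' T e \<tau>'" "sty ar \<Gamma> \<Delta> \<tau>' T a \<tau>'"
    using sty_whileE[OF ty refl] T1 by auto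
  obtain pa where pa: "pm pa" "\<And>\<mu> b \<mu>'. rch (\<mu>, a) \<Longrightarrow> big_step one sem (\<mu>, a) (b, \<mu>') \<Longrightarrow>
      (\<forall>j. L j \<mu>' \<le> L j \<mu> + pa (L (Suc j) \<mu>))" using IH[OF t(4)] unfolding Cin_def by blast
  define u where "u = card (U e)"
  define nv where "nv = card V"
  define q where "q y = (nv * (y+1)^2 + y + 3) ^ u" for y
  have pmq: "pm q"
  proof -
    have "pm (\<lambda>y. nv * (y+1)^2 + y + 3)"
      using pm_add[OF pm_add[OF pm_mult[OF pm_const[of nv] pm_pow[of 2]] pm_id] pm_const[of 3]] by simp
    then show ?thesis unfolding q_def by (rule pm_power)
  qed
  have pmq': "pm (\<lambda>y. q (y + 1) + 1)"
    using pm_add[OF pm_comp[OF pmq pm_add[OF pm_id pm_const[of 1]]] pm_const[of 1]] by simp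
  define G where "G y = H pa T (q (y+1) + 1) (y+1)" for y
  have pmG: "pm G" unfolding G_def using pm_H[OF pa(1) pmq'] .
  define p where "p y = G y + 1" for y
  have pmp: "pm p" unfolding p_def using pm_add[OF pmG pm_const[of 1]] .
  have main: "\<forall>k. L k \<mu>' \<le> L k \<mu>0 + p (L (Suc k) \<mu>0)"
    if r: "rch (\<mu>0, While e a)" "big_step one sem (\<mu>0, While e a) (b, \<mu>')" for \<mu>0 b \<mu>'
  proof -
    let ?W = "While e a"
    have "runR one sem e a \<mu>0 \<mu>'" using while_run[OF r(2)] by simp
    then obtain n hs where h0: "hs 0 = \<mu>0"
      and hstep: "\<forall>i<n. eval one sem (hs i) e = [one] \<and> big_step one sem (hs i, a) (True, hs (Suc i))"
      and hend: "(eval one sem (hs n) e \<noteq> [one] \<and> \<mu>' = hs n) \<or>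
      (eval one sem (hs n) e = [one] \<and> big_step one sem (hs n, a) (False, \<mu>'))"
      unfolding runR_def by (elim exE conjE) (rule that, assumption+)
    have c1: "tree_child one sem (hs i, ?W) (hs i, Seq a ?W)" if "i < n" for i
      by (rule CWhile) (rule conjunct1[OF hstep[rule_format, OF that]])
    have c2: "tree_child one sem (hs i, Seq a ?W) (hs (Suc i), ?W)" if "i < n" for i
      by (rule CSeq2) (rule conjunct2[OF hstep[rule_format, OF that]])
    have rchW: "rch (hs i, ?W)" if "i \<le> n" for i
      using that
    proof (induction i)
      case 0 then show ?case using r(1) h0 by simp
    next
      case (Suc i)
      then have "rch (hs i, ?W)" by simp
      then show ?case using reach_step c1 c2 Suc.prems by (meson Suc_le_lessD)
    qed
    have rchA: "rch (hs i, a)" if "i \<le> n" "eval one sem (hs i) e = [one]" for i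
      using rch_seq1[OF rch_while[OF rchW[OF that(1)] that(2)]] .
    have tr1: "(tree_child one sem)\<^sup>+\<^sup>+ (hs i, ?W) (hs (Suc i), ?W)" if "i < n" for i
      using c1[OF that] c2[OF that] by (meson tranclp.r_into_trancl tranclp.trancl_into_trancl)
    have tr: "(tree_child one sem)\<^sup>+\<^sup>+ (hs i, ?W) (hs j, ?W)" if "i < j" "j \<le> n" for i j
      using that
    proof (induction j)
      case 0 then show ?case by simp
    next
      case (Suc j)
      show ?case
      proof (cases "i = j")
        case True then show ?thesis using tr1 Suc.prems by simp
      next
        case False
        then have "(tree_child one sem)\<^sup>+\<^sup>+ (hs i, ?W) (hs j, ?W)" using Suc by simp
        then show ?thesis using tr1[of j] Suc.prems by (meson Suc_le_lessD tranclp_trans)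
      qed
    qed
    have dist: "\<not> (\<forall>x\<in>U e. hs i x = hs j x)" if ij: "i < j" "j \<le> n" for i j
    proof
      assume ag: "\<forall>x\<in>U e. hs i x = hs j x"
      obtain \<mu>r where "(tree_child one sem)\<^sup>*\<^sup>* (\<mu>r, bodyQ) (hs i, ?W)"
        using rchW[of i] ij unfolding reach_def by auto
      then show False using ap tr[OF ij] ag by blast
    qed
    let ?S = "Sset zero one \<Gamma> V \<tau>' \<mu>0"
    let ?B = "L \<tau>' \<mu>0"
    have VW: "svars ?W \<subseteq> V" using rch_V[OF r(1)] .
    have clS: "closedS zero one ?S" by (rule Sset_closed[OF finV])
    have fcS: "finite ?S \<and> card ?S \<le> card V * (?B + 1) ^ 2 + ?B + 3" by (rule Sset_finite_card[OF finV])
    have invstep: "Inv \<Gamma> V \<tau>' ?S \<mu>2" if "big_step one sem (\<mu>1, a) (b', \<mu>2)" "Inv \<Gamma> V \<tau>' ?S \<mu>1"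
      for \<mu>1 b' \<mu>2
      using inv_big_step[OF that(1) safe clS t(1) t(2), of \<Gamma> \<tau>' \<tau>' V] t(4) VW that(2) by simp
    have inv: "Inv \<Gamma> V \<tau>' ?S (hs i)" if "i \<le> n" for i
      using that
    proof (induction i)
      case 0 then show ?case using Sset_inv0 h0 by simp
    next
      case (Suc i) then show ?case using invstep hstep by (meson Suc_le_lessD less_imp_le_nat)
    qed
    have Uprop: "x \<in> V \<and> \<tau>' \<le> \<Gamma> x" if "x \<in> U e" for x
      using that U_evars[of e] VW ety_U_level[OF t(3) safe] T1 by auto
    have count: "n + 1 \<le> q ?B"
    proof -
      have finU: "finite (U e)" using finite_subset[OF U_evars finite_evars] .
      define xs where "xs = sorted_list_of_set (U e)"
      have sxs: "set xs = U e" and lxs: "length xs = u" using finU unfolding xs_def u_def by auto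
      define rr where "rr i = map (hs i) xs" for i
      have inj: "inj_on rr {..n}"
      proof (rule inj_onI)
        fix i j assume ij: "i \<in> {..n}" "j \<in> {..n}" "rr i = rr j"
        then have ag: "\<forall>x\<in>U e. hs i x = hs j x" using sxs unfolding rr_def by (simp add: map_eq_conv)
        show "i = j"
        proof (rule ccontr)
          assume "i \<noteq> j"
          then have "i < j \<or> j < i" by arith
          then show False using dist ag ij by (metis atMost_iff)
        qed
      qed
      have sub: "rr ` {..n} \<subseteq> {ys. set ys \<subseteq> ?S \<and> length ys = u}"
      proof
        fix y assume "y \<in> rr ` {..n}"
        then obtain i where i: "i \<le> n" "y = rr i" by auto
        have "hs i x \<in> ?S" if "x \<in> U e" for x
          using inv[OF i(1)] Uprop[OF that] unfolding Inv_def by blast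
        then show "y \<in> {ys. set ys \<subseteq> ?S \<and> length ys = u}" using i sxs lxs unfolding rr_def by auto
      qed
      have "n + 1 = card (rr ` {..n})" using card_image[OF inj] by simp
      also have "\<dots> \<le> card {ys. set ys \<subseteq> ?S \<and> length ys = u}"
        by (rule card_mono[OF _ sub]) (use fcS finite_lists_length_eq in blast)
      also have "\<dots> = card ?S ^ u" using card_lists_length_eq fcS by blast
      also have "\<dots> \<le> q ?B" unfolding q_def nv_def using fcS by (simp add: power_mono)
      finally show ?thesis .
    qed
    obtain m g where g0: "g 0 = \<mu>0" and gm: "g m = \<mu>'" and mn: "m \<le> n + 1"
      and gstep: "\<forall>i<m. \<exists>b'. big_step one sem (g i, a) (b', g (Suc i)) \<and> rch (g i, a)"
      and ginv: "\<forall>i\<le>m. Inv \<Gamma> V \<tau>' ?S (g i)"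
    proof -
      from hend show ?thesis
      proof (elim disjE conjE)
        assume "eval one sem (hs n) e \<noteq> [one]" "\<mu>' = hs n"
        then show ?thesis using that[of hs n] h0 hstep rchA inv by auto
      next
        assume a1: "eval one sem (hs n) e = [one]" and a2: "big_step one sem (hs n, a) (False, \<mu>')"
        define g where "g = hs(Suc n := \<mu>')"
        have "\<forall>i<Suc n. \<exists>b'. big_step one sem (g i, a) (b', g (Suc i)) \<and> rch (g i, a)"
        proof (intro allI impI)
          fix i assume i: "i < Suc n"
          show "\<exists>b'. big_step one sem (g i, a) (b', g (Suc i)) \<and> rch (g i, a)"
          proof (cases "i = n")
            case True then show ?thesis using a1 a2 rchA[of n] unfolding g_def by auto
          next
            case False
            then have iln: "i < n" using i by simp
            have "big_step one sem (hs i, a) (True, hs (Suc i))" using hstep iln by blast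
            moreover have "rch (hs i, a)" using rchA[of i] hstep iln by simp
            moreover have "g i = hs i" "g (Suc i) = hs (Suc i)" using iln unfolding g_def by auto
            ultimately show ?thesis by auto
          qed
        qed
        moreover have "\<forall>i\<le>Suc n. Inv \<Gamma> V \<tau>' ?S (g i)"
          using inv invstep[OF a2 inv[of n]] unfolding g_def by (auto simp: le_Suc_eq)
        ultimately show ?thesis using that[of g "Suc n"] h0 unfolding g_def by auto
      qed
    qed
    have lstep: "\<forall>i<m. \<forall>k. L k (g (Suc i)) \<le> L k (g i) + pa (L (Suc k) (g i))"
      using gstep pa(2) by blast
    have ltop: "\<forall>i\<le>m. \<forall>k\<ge>\<tau>'. L k (g i) \<le> max 1 ?B"
    proof (intro allI impI)
      fix i k assume i: "i \<le> m" and k: "\<tau>' \<le> k"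
      show "L k (g i) \<le> max 1 ?B"
      proof (rule Lv_le[OF finV], intro ballI impI)
        fix x assume x: "x \<in> V" "k \<le> \<Gamma> x"
        then have "g i x \<in> ?S" using ginv i k unfolding Inv_def by auto
        then show "length (g i x) \<le> max 1 ?B" by (rule Sset_len[OF finV])
      qed
    qed
    show ?thesis
    proof
      fix k
      have p1: "1 \<le> p y" for y unfolding p_def by simp
      consider "k < \<tau>'" | "k = \<tau>'" | "\<tau>' < k" by arith
      then show "L k \<mu>' \<le> L k \<mu>0 + p (L (Suc k) \<mu>0)"
      proof cases
        case 1
        let ?Y = "L (Suc k) \<mu>0 + 1"
        have BY: "?B \<le> L (Suc k) \<mu>0" using Lv_anti[OF finV, of "Suc k" \<tau>'] 1 by simp
        have "L k (g m) \<le> L k (g 0) + H pa T m ?Y"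
        proof (rule arith_levels[of pa m "\<lambda>i k. L k (g i)" \<tau>' "max 1 ?B"])
          show "mono pa" using pa(1) unfolding pm_def by blast
          show "\<forall>i<m. \<forall>k. L k (g (Suc i)) \<le> L k (g i) + pa (L (Suc k) (g i))" by (rule lstep)
          show "\<forall>i\<le>m. \<forall>k\<ge>\<tau>'. L k (g i) \<le> max 1 ?B" by (rule ltop)
          show "\<tau>' \<le> k + T" using t(2) by simp
          show "m \<le> m" by simp
          show "max 1 ?B \<le> ?Y" using BY by simp
          show "\<forall>k'>k. L k' (g 0) \<le> ?Y"
          proof (intro allI impI)
            fix k' assume "k < k'"
            then have "Suc k \<le> k'" by simp
            then have "L k' \<mu>0 \<le> L (Suc k) \<mu>0" using Lv_anti[OF finV] by blast
            then show "L k' (g 0) \<le> ?Y" using g0 by simp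
          qed
        qed
        also have "H pa T m ?Y \<le> H pa T (q ?Y + 1) ?Y"
        proof -
          have "q ?B \<le> q ?Y" using pm_mono[OF pmq] BY by simp
          then have "m \<le> q ?Y + 1" using mn count by linarith
          then show ?thesis using H_mono_i pa(1) unfolding pm_def by blast
        qed
        finally show ?thesis using gm g0 unfolding p_def G_def by simp
      next
        case 2
        have "L k \<mu>' \<le> max 1 ?B" using ltop mn gm 2 by (metis le_refl)
        then show ?thesis using 2 p1[of "L (Suc k) \<mu>0"] by (simp add: max_def split: if_splits)
      next
        case 3
        have tyW: "sty ar \<Gamma> \<Delta> \<tau>' T ?W \<tau>'" using t by (intro TWh) auto
        have "L k \<mu>' \<le> L k \<mu>0"
        proof (rule Lv_le[OF finV], intro ballI impI)
          fix x assume x: "x \<in> V" "k \<le> \<Gamma> x"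
          then have "\<mu>' x = \<mu>0 x" using unchanged2[OF r(2), of ar \<Gamma> \<Delta> \<tau>' T \<tau>' x] tyW 3 by simp
          then show "length (\<mu>' x) \<le> L k \<mu>0" using Lv_ge[of V x k \<Gamma> \<mu>0, OF finV x] by simp
        qed
        then show ?thesis by simp
      qed
    qed
  qed
  show ?thesis unfolding Cin_def using pmp main by blast
qed

theorem cin:
  assumes "1 \<le> T"
  shows "sty ar \<Gamma> \<Delta> ti T s \<sigma> \<Longrightarrow> Cin s"
proof (induction s arbitrary: ti \<sigma>)
  case Skip show ?case by (rule cin_skip)
next
  case (Assign x e) then show ?case using cin_assign[OF assms] by blast
next
  case (Seq s1 s2)
  then show ?case using sty_seqE[OF Seq.prems refl] cin_seq by blast
next
  case (If e s1 s2)
  then show ?case using sty_ifE[OF If.prems refl] cin_if by blast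
next
  case (While e s)
  then show ?case using cin_while[OF assms While.prems] by blast
next
  case (Break e) show ?case by (rule cin_break)
qed

end


lemma op_bound:
  assumes "safe_env zero one ar sem \<Delta>" "\<Delta> op = Some D"
  shows "\<exists>h. pm h \<and> (\<forall>ws. length ws = ar op \<longrightarrow> length (sem op ws) \<le> h (maxlen ws))"
proof -
  have cls: "op_neutral zero one ar sem op \<or> op_positive ar sem op \<or> op_polynomial ar sem op"
    using assms unfolding safe_env_def by blast
  have pm1: "pm (\<lambda>z. z + 1)" using pm_add[OF pm_id pm_const] .
  from cls show ?thesis
  proof (elim disjE)
    assume "op_neutral zero one ar sem op"
    then have "\<forall>ws. length ws = ar op \<longrightarrow> length (sem op ws) \<le> maxlen ws + 1"
      unfolding op_neutral_def
    proof (elim disjE exE conjE)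
      assume "\<forall>ws. length ws = ar op \<longrightarrow> sem op ws \<in> {[zero], [one]}"
      then show ?thesis by fastforce
    next
      fix i assume i: "i < ar op" "\<forall>ws. length ws = ar op \<longrightarrow> subword (sem op ws) (ws ! i)"
      show ?thesis
      proof (intro allI impI)
        fix ws :: "'a list list" assume l: "length ws = ar op"
        have "length (sem op ws) \<le> length (ws ! i)" using i l subword_len by blast
        also have "\<dots> \<le> maxlen ws" using i l by (intro maxlen_ge) simp
        finally show "length (sem op ws) \<le> maxlen ws + 1" by simp
      qed
    qed
    then show ?thesis using pm1 by blast
  next
    assume "op_positive ar sem op"
    then show ?thesis using cpos[of ar sem op] pm_add[OF pm_id pm_const[of "cpos ar sem op"]] by blast
  next
    assume "op_polynomial ar sem op"
    then obtain p :: "nat poly" where p: "\<forall>ws. length ws = ar op \<longrightarrow> length (sem op ws) \<le> poly p (maxlen ws)"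
      unfolding op_polynomial_def by blast
    let ?h = "\<lambda>z. \<Sum>i\<in>{..degree p}. coeff p i * (z + 1) ^ i"
    have "pm ?h"
    proof (rule pm_sum)
      show "finite {..degree p}" by simp
      show "\<forall>i\<in>{..degree p}. pm (\<lambda>z. coeff p i * (z + 1) ^ i)" by (intro ballI pm_mult pm_const pm_pow)
    qed
    moreover have "poly p z \<le> ?h z" for z
      unfolding poly_altdef by (intro sum_mono mult_le_mono2 power_mono) auto
    ultimately show ?thesis using p by (meson le_trans)
  qed
qed

context qctx
begin

lemma ety_top:
  assumes "ety ar \<Gamma> \<Delta> ti to e \<rho>"
  shows "evars e \<subseteq> V \<Longrightarrow> \<exists>g. pm g \<and> (\<forall>\<mu>. length (eval one sem \<mu> e) \<le> g (L 0 \<mu>))"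
  using assms
proof (induction rule: ety.induct)
  case (TVar x \<tau> ti to)
  have "length (eval one sem \<mu> (Var x)) \<le> L 0 \<mu>" for \<mu>
    using Lv_ge[of V x 0 \<Gamma> \<mu>, OF finV] TVar by simp
  then show ?case using pm_id by blast
next
  case (TOp op D ts ti to es)
  obtain h where h: "pm h" "\<forall>ws. length ws = ar op \<longrightarrow> length (sem op ws) \<le> h (maxlen ws)"
    using op_bound[OF safe TOp.hyps(1)] by blast
  have "\<forall>i. \<exists>g. i < length es \<longrightarrow> pm g \<and> (\<forall>\<mu>. length (eval one sem \<mu> (es ! i)) \<le> g (L 0 \<mu>))"
  proof
    fix i show "\<exists>g. i < length es \<longrightarrow> pm g \<and> (\<forall>\<mu>. length (eval one sem \<mu> (es ! i)) \<le> g (L 0 \<mu>))"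
    proof (cases "i < length es")
      case True
      have "evars (es ! i) \<subseteq> V" using TOp.prems True nth_mem by fastforce
      then show ?thesis using TOp.IH True by blast
    qed auto
  qed
  then obtain gs where gs: "\<And>i. i < length es \<Longrightarrow> pm (gs i) \<and> (\<forall>\<mu>. length (eval one sem \<mu> (es ! i)) \<le> gs i (L 0 \<mu>))"
    by metis
  let ?G = "\<lambda>y. \<Sum>i\<in>{..<length es}. gs i y"
  have pmG: "pm ?G" using gs by (intro pm_sum) auto
  have "length (eval one sem \<mu> (Op op es)) \<le> h (?G (L 0 \<mu>))" for \<mu>
  proof -
    let ?ws = "map (eval one sem \<mu>) es"
    have "maxlen ?ws \<le> ?G (L 0 \<mu>)"
    proof (rule maxlen_le, intro ballI)
      fix w assume "w \<in> set ?ws"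
      then obtain i where i: "i < length es" "w = eval one sem \<mu> (es ! i)" by (auto simp: in_set_conv_nth)
      then have "length w \<le> gs i (L 0 \<mu>)" using gs by blast
      also have "\<dots> \<le> ?G (L 0 \<mu>)" using i by (intro member_le_sum) auto
      finally show "length w \<le> ?G (L 0 \<mu>)" .
    qed
    then have "h (maxlen ?ws) \<le> h (?G (L 0 \<mu>))" using pm_mono[OF h(1)] by blast
    moreover have "length (sem op ?ws) \<le> h (maxlen ?ws)" using h(2) TOp.hyps(3) by simp
    ultimately show ?thesis by simp
  qed
  then show ?case using pm_comp[OF h(1) pmG] by blast
next
  case (TDcl ti to e1 \<tau>1 e2 \<tau>)
  then obtain g where g: "pm g" "\<forall>\<mu>. length (eval one sem \<mu> e2) \<le> g (L 0 \<mu>)" by auto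
  have "length (eval one sem \<mu> (Declass e1 e2)) \<le> g (L 0 \<mu>)" for \<mu>
    using g(2)[rule_format, of \<mu>] by simp
  then show ?case using g(1) by blast
qed

definition Ctop :: "'op stmt \<Rightarrow> bool" where
  "Ctop s \<longleftrightarrow> (\<exists>f. pm f \<and> (\<forall>\<mu> b \<mu>'. rch (\<mu>, s) \<longrightarrow> big_step one sem (\<mu>, s) (b, \<mu>') \<longrightarrow> L 0 \<mu>' \<le> f (L 0 \<mu>)))"

theorem ctop: "sty ar \<Gamma> \<Delta> 0 0 s \<sigma> \<Longrightarrow> Ctop s"
proof (induction s arbitrary: \<sigma>)
  case Skip
  have "L 0 \<mu>' \<le> L 0 \<mu>" if "big_step one sem (\<mu>, Skip) (b, \<mu>')" for \<mu> b \<mu>'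
    using that by (auto elim: BSkipE)
  then show ?case unfolding Ctop_def using pm_id by blast
next
  case (Break e)
  have "L 0 \<mu>' \<le> L 0 \<mu>" if "big_step one sem (\<mu>, Break e) (b, \<mu>')" for \<mu> b \<mu>'
    using that by (auto elim: BBreakE)
  then show ?case unfolding Ctop_def using pm_id by blast
next
  case (Assign x e)
  obtain \<tau>2 where t: "ety ar \<Gamma> \<Delta> 0 0 e \<tau>2" using sty_assignE[OF Assign.prems refl] by blast
  show ?case
  proof (cases "evars e \<subseteq> V")
    case False
    have "\<not> rch (\<mu>, Assign x e)" for \<mu> using rch_V[of \<mu> "Assign x e"] False by auto
    then show ?thesis unfolding Ctop_def using pm_id by blast
  next
    case True
    obtain g where g: "pm g" "\<forall>\<mu>. length (eval one sem \<mu> e) \<le> g (L 0 \<mu>)" using ety_top[OF t True] by blast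
    have "L 0 \<mu>' \<le> L 0 \<mu> + g (L 0 \<mu>)" if r: "big_step one sem (\<mu>, Assign x e) (b, \<mu>')" for \<mu> b \<mu>'
    proof (rule Lv_le[OF finV], intro ballI impI)
      fix y assume y: "y \<in> V" "0 \<le> \<Gamma> y"
      have \<mu>': "\<mu>' = \<mu>(x := eval one sem \<mu> e)" using r by (auto elim: BAssignE)
      show "length (\<mu>' y) \<le> L 0 \<mu> + g (L 0 \<mu>)"
      proof (cases "y = x")
        case True then show ?thesis using g(2) \<mu>' by (simp add: trans_le_add2)
      next
        case False then show ?thesis using Lv_ge[of V y 0 \<Gamma> \<mu>, OF finV y(1)] \<mu>' by simp
      qed
    qed
    then show ?thesis unfolding Ctop_def using pm_add[OF pm_id g(1)] by blast
  qed
next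
  case (Seq s1 s2)
  obtain \<sigma>' where t: "sty ar \<Gamma> \<Delta> 0 0 s1 \<sigma>'" "sty ar \<Gamma> \<Delta> 0 0 s2 \<sigma>'" using sty_seqE[OF Seq.prems refl] by blast
  obtain fa where fa: "pm fa" "\<And>\<mu> b \<mu>'. rch (\<mu>, s1) \<Longrightarrow> big_step one sem (\<mu>, s1) (b, \<mu>') \<Longrightarrow> L 0 \<mu>' \<le> fa (L 0 \<mu>)"
    using Seq.IH(1)[OF t(1)] unfolding Ctop_def by blast
  obtain fb where fb: "pm fb" "\<And>\<mu> b \<mu>'. rch (\<mu>, s2) \<Longrightarrow> big_step one sem (\<mu>, s2) (b, \<mu>') \<Longrightarrow> L 0 \<mu>' \<le> fb (L 0 \<mu>)"
    using Seq.IH(2)[OF t(2)] unfolding Ctop_def by blast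
  have "L 0 \<mu>' \<le> fa (L 0 \<mu>) + fb (fa (L 0 \<mu>))"
    if r: "rch (\<mu>, Seq s1 s2)" "big_step one sem (\<mu>, Seq s1 s2) (b, \<mu>')" for \<mu> b \<mu>'
    using seq_inv[OF r(2)]
  proof (elim disjE exE conjE)
    assume "big_step one sem (\<mu>, s1) (False, \<mu>')"
    then show ?thesis using fa(2)[OF rch_seq1[OF r(1)]] by fastforce
  next
    fix \<mu>1 assume 2: "big_step one sem (\<mu>, s1) (True, \<mu>1)" "big_step one sem (\<mu>1, s2) (b, \<mu>')"
    have "L 0 \<mu>1 \<le> fa (L 0 \<mu>)" using fa(2)[OF rch_seq1[OF r(1)] 2(1)] .
    then have "fb (L 0 \<mu>1) \<le> fb (fa (L 0 \<mu>))" using pm_mono[OF fb(1)] by blast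
    moreover have "L 0 \<mu>' \<le> fb (L 0 \<mu>1)" using fb(2)[OF rch_seq2[OF r(1) 2(1)] 2(2)] .
    ultimately show ?thesis by linarith
  qed
  then show ?case unfolding Ctop_def using pm_add[OF fa(1) pm_comp[OF fb(1) fa(1)]] by blast
next
  case (If e s1 s2)
  obtain \<sigma>' where t: "sty ar \<Gamma> \<Delta> 0 0 s1 \<sigma>'" "sty ar \<Gamma> \<Delta> 0 0 s2 \<sigma>'" using sty_ifE[OF If.prems refl] by blast
  obtain fa where fa: "pm fa" "\<And>\<mu> b \<mu>'. rch (\<mu>, s1) \<Longrightarrow> big_step one sem (\<mu>, s1) (b, \<mu>') \<Longrightarrow> L 0 \<mu>' \<le> fa (L 0 \<mu>)"
    using If.IH(1)[OF t(1)] unfolding Ctop_def by blast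
  obtain fb where fb: "pm fb" "\<And>\<mu> b \<mu>'. rch (\<mu>, s2) \<Longrightarrow> big_step one sem (\<mu>, s2) (b, \<mu>') \<Longrightarrow> L 0 \<mu>' \<le> fb (L 0 \<mu>)"
    using If.IH(2)[OF t(2)] unfolding Ctop_def by blast
  have "L 0 \<mu>' \<le> fa (L 0 \<mu>) + fb (L 0 \<mu>)"
    if r: "rch (\<mu>, If e s1 s2)" "big_step one sem (\<mu>, If e s1 s2) (b, \<mu>')" for \<mu> b \<mu>'
    using if_inv[OF r(2)]
  proof (elim disjE conjE)
    assume a: "eval one sem \<mu> e = [one]" "big_step one sem (\<mu>, s1) (b, \<mu>')"
    show ?thesis using fa(2)[OF rch_ifT[OF r(1) a(1)] a(2)] by linarith
  next
    assume a: "eval one sem \<mu> e \<noteq> [one]" "big_step one sem (\<mu>, s2) (b, \<mu>')"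
    show ?thesis using fb(2)[OF rch_ifF[OF r(1) a(1)] a(2)] by linarith
  qed
  then show ?case unfolding Ctop_def using pm_add[OF fa(1) fb(1)] by blast
next
  case (While e a)
  obtain \<tau>' where t: "1 \<le> \<tau>'" "ety ar \<Gamma> \<Delta> \<tau>' \<tau>' e \<tau>'" "sty ar \<Gamma> \<Delta> \<tau>' \<tau>' a \<tau>'"
    using sty_whileE[OF While.prems refl] by auto
  have tyW: "sty ar \<Gamma> \<Delta> \<tau>' \<tau>' (While e a) \<tau>'" using t by (intro TWh) auto
  obtain p where p: "pm p" "\<And>\<mu> b \<mu>'. rch (\<mu>, While e a) \<Longrightarrow> big_step one sem (\<mu>, While e a) (b, \<mu>') \<Longrightarrow>
      (\<forall>j. L j \<mu>' \<le> L j \<mu> + p (L (Suc j) \<mu>))"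
    using cin[OF t(1) tyW] unfolding Cin_def by blast
  have "L 0 \<mu>' \<le> L 0 \<mu> + p (L 0 \<mu>)"
    if r: "rch (\<mu>, While e a)" "big_step one sem (\<mu>, While e a) (b, \<mu>')" for \<mu> b \<mu>'
  proof -
    have "L 0 \<mu>' \<le> L 0 \<mu> + p (L 1 \<mu>)" using p(2)[OF r] by simp
    moreover have "p (L 1 \<mu>) \<le> p (L 0 \<mu>)" using pm_mono[OF p(1)] Lv_anti[OF finV, of 0 1 \<Gamma> \<mu>] by simp
    ultimately show ?thesis by linarith
  qed
  then show ?case unfolding Ctop_def using pm_add[OF pm_id p(1)] by blast
qed

end

lemma foldl_upd_mem:
  "\<forall>(\<mu>::var \<Rightarrow> 'b) ws. (\<forall>y. \<mu> y \<in> A) \<longrightarrow> set ws \<subseteq> A \<longrightarrow>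
     (\<forall>y. foldl (\<lambda>\<mu> (x, w). \<mu>(x := w)) \<mu> (zip (xs::var list) ws) y \<in> A)"
proof (induction xs)
  case Nil then show ?case by simp
next
  case (Cons x xs)
  show ?case
  proof (intro allI impI)
    fix \<mu> :: "var \<Rightarrow> 'b" and ws :: "'b list" and y
    assume h: "\<forall>y. \<mu> y \<in> A" "set ws \<subseteq> A"
    show "foldl (\<lambda>\<mu> (x, w). \<mu>(x := w)) \<mu> (zip (x # xs) ws) y \<in> A"
    proof (cases ws)
      case Nil then show ?thesis using h by simp
    next
      case (Cons w ws')
      have "\<forall>y. (\<mu>(x := w)) y \<in> A" using h Cons by auto
      moreover have "set ws' \<subseteq> A" using h Cons by auto
      ultimately have "foldl (\<lambda>\<mu> (x, w). \<mu>(x := w)) (\<mu>(x := w)) (zip xs ws') y \<in> A"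
        using Cons.IH by blast
      then show ?thesis using Cons by simp
    qed
  qed
qed

lemma init_store_mem: "init_store xs ws x \<in> insert [] (set ws)"
proof -
  have a: "\<And>y. ((\<lambda>_. []) :: var \<Rightarrow> _ list) y \<in> insert [] (set ws)" by simp
  have b: "set ws \<subseteq> insert [] (set ws)" by auto
  from foldl_upd_mem[of "insert [] (set ws)" xs, rule_format, of "\<lambda>_. []" ws, OF a b]
  show ?thesis unfolding init_store_def .
qed


section \<open>Polynomial versus exponential\<close>

lemma sq_pow: "4 \<le> j \<Longrightarrow> j ^ 2 \<le> (2::nat) ^ j"
proof (induction j rule: dec_induct)
  case base then show ?case by simp
next
  case (step j)
  have "(Suc j) ^ 2 = j ^ 2 + 2 * j + 1" by (simp add: power2_eq_square)
  also have "\<dots> \<le> 2 * j ^ 2"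
  proof -
    have "4 * j \<le> j * j" using step(1) by (rule mult_le_mono1)
    then have "2 * j + 1 \<le> j * j" using step(1) by linarith
    then show ?thesis by (simp add: power2_eq_square)
  qed
  also have "\<dots> \<le> 2 * 2 ^ j" using step by simp
  finally show ?case by simp
qed

lemma lin_exp: "\<exists>j. a * j + b < (2::nat) ^ j"
proof -
  let ?j = "a + b + 4"
  have "a * ?j + b < ?j * ?j" by (simp add: algebra_simps)
  also have "\<dots> = ?j ^ 2" by (simp add: power2_eq_square)
  also have "\<dots> \<le> 2 ^ ?j" by (rule sq_pow) simp
  finally show ?thesis by blast
qed

lemma poly_exp: "\<exists>n. c * (n + 1) ^ k + n < (2::nat) ^ n"
proof -
  define F where "F n = c * (n + 1) ^ k + n" for n
  define K where "K = k + 1"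
  have F2: "F (2 * n) \<le> 2 ^ K * F n" for n
  proof -
    have "(2 * n + 1) ^ k \<le> (2 * (n + 1)) ^ k" by (rule power_mono) auto
    also have "\<dots> = 2 ^ k * (n + 1) ^ k" by (simp only: power_mult_distrib)
    finally have a: "c * (2 * n + 1) ^ k \<le> 2 ^ K * (c * (n + 1) ^ k)"
      unfolding K_def by (simp add: mult_le_mono2 mult.left_commute)
    have b: "2 * n \<le> 2 ^ K * n" unfolding K_def
    proof -
      have "2 \<le> (2::nat) ^ (k + 1)" by simp
      then show "2 * n \<le> 2 ^ (k + 1) * n" by (rule mult_le_mono1)
    qed
    show ?thesis unfolding F_def using a b add_mult_distrib2[of "2^K" "c*(n+1)^k" n] by linarith
  qed
  have Fj: "F (2 ^ j) \<le> 2 ^ (K * j) * F 1" for j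
  proof (induction j)
    case 0 then show ?case by simp
  next
    case (Suc j)
    have "F (2 ^ Suc j) = F (2 * 2 ^ j)" by simp
    also have "\<dots> \<le> 2 ^ K * F (2 ^ j)" by (rule F2)
    also have "\<dots> \<le> 2 ^ K * (2 ^ (K * j) * F 1)" using Suc by simp
    also have "\<dots> = 2 ^ (K * Suc j) * F 1" by (simp add: power_add mult_ac)
    finally show ?case .
  qed
  obtain j where j: "K * j + F 1 < 2 ^ j" using lin_exp by blast
  have "F (2 ^ j) \<le> 2 ^ (K * j) * F 1" by (rule Fj)
  also have "\<dots> < 2 ^ (K * j) * 2 ^ F 1" by simp
  also have "\<dots> = 2 ^ (K * j + F 1)" by (simp add: power_add)
  also have "\<dots> \<le> 2 ^ (2 ^ j)" using j by (intro power_increasing) auto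
  finally show ?thesis unfolding F_def by blast
qed

section \<open>The exponential program\<close>

definition inner :: "'op \<Rightarrow> 'op \<Rightarrow> 'op \<Rightarrow> 'op stmt" where
  "inner lt tlo suc = While (Op lt [Var 3, Var 2]) (Seq (Assign 2 (Op tlo [Var 2])) (Assign 1 (Op suc [Var 1])))"

definition outer :: "'op \<Rightarrow> 'op \<Rightarrow> 'op \<Rightarrow> 'op stmt" where
  "outer lt tlo suc = While (Op lt [Var 3, Var 0])
     (Seq (Assign 0 (Op tlo [Var 0])) (Seq (Assign 2 (Var 1)) (inner lt tlo suc)))"

definition expP :: "'op \<Rightarrow> 'op \<Rightarrow> 'op \<Rightarrow> 'op prog" where
  "expP lt tlo suc = Prog [0] (Seq (Assign 1 (Op suc [Var 3])) (outer lt tlo suc)) 1"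

locale ops =
  fixes zero one :: 'a and sem :: "'op \<Rightarrow> 'a list list \<Rightarrow> 'a list" and lt tlo suc :: 'op
  assumes zo: "zero \<noteq> one"
    and lt: "\<forall>u v. sem lt [u, v] = bool_w zero one (length u < length v)"
    and tlo: "\<forall>w. sem tlo [w] = tl w"
    and suc: "\<forall>w. sem suc [w] = one # w"
begin

lemma guard: "\<mu> 3 = [] \<Longrightarrow> eval one sem \<mu> (Op lt [Var 3, Var v]) = [one] \<longleftrightarrow> \<mu> v \<noteq> []"
  using lt zo by (simp add: bool_w_def)

lemma inner_run:
  "\<forall>\<mu>. \<mu> 3 = [] \<longrightarrow> length (\<mu> 2) = n \<longrightarrow>
    big_step one sem (\<mu>, inner lt tlo suc) (True, \<mu>(2 := [], 1 := replicate n one @ \<mu> 1))"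
proof (induction n)
  case 0
  show ?case
  proof (intro allI impI)
    fix \<mu> :: "var \<Rightarrow> 'a list" assume h: "\<mu> 3 = []" "length (\<mu> 2) = 0"
    have "eval one sem \<mu> (Op lt [Var 3, Var 2]) \<noteq> [one]" using guard[of \<mu> 2, OF h(1)] h by simp
    then have "big_step one sem (\<mu>, inner lt tlo suc) (True, \<mu>)" unfolding inner_def by (rule BWhileF)
    moreover have "\<mu>(2 := [], 1 := replicate 0 one @ \<mu> 1) = \<mu>" using h by auto
    ultimately show "big_step one sem (\<mu>, inner lt tlo suc) (True, \<mu>(2 := [], 1 := replicate 0 one @ \<mu> 1))"
      by simp
  qed
next
  case (Suc n)
  show ?case
  proof (intro allI impI)
    fix \<mu> :: "var \<Rightarrow> 'a list" assume h: "\<mu> 3 = []" "length (\<mu> 2) = Suc n"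
    have g: "eval one sem \<mu> (Op lt [Var 3, Var 2]) = [one]" using guard[of \<mu> 2, OF h(1)] h by auto
    define \<mu>1 where "\<mu>1 = \<mu>(2 := tl (\<mu> 2))"
    define \<mu>2 where "\<mu>2 = \<mu>1(1 := one # \<mu>1 1)"
    have s1: "big_step one sem (\<mu>, Assign 2 (Op tlo [Var 2])) (True, \<mu>1)"
      using BAssign[of one sem \<mu> 2 "Op tlo [Var 2]"] tlo unfolding \<mu>1_def by simp
    have s2: "big_step one sem (\<mu>1, Assign 1 (Op suc [Var 1])) (True, \<mu>2)"
      using BAssign[of one sem \<mu>1 1 "Op suc [Var 1]"] suc unfolding \<mu>2_def by simp
    have b: "big_step one sem (\<mu>, Seq (Assign 2 (Op tlo [Var 2])) (Assign 1 (Op suc [Var 1]))) (True, \<mu>2)"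
      by (rule BSeq[OF s1 s2])
    have "\<mu>2 3 = []" "length (\<mu>2 2) = n" using h unfolding \<mu>2_def \<mu>1_def by auto
    then have ih: "big_step one sem (\<mu>2, inner lt tlo suc) (True, \<mu>2(2 := [], 1 := replicate n one @ \<mu>2 1))"
      using Suc.IH by blast
    have eq: "\<mu>2(2 := [], 1 := replicate n one @ \<mu>2 1) = \<mu>(2 := [], 1 := replicate (Suc n) one @ \<mu> 1)"
      unfolding \<mu>2_def \<mu>1_def by (auto simp: replicate_app_Cons_same)
    have "big_step one sem (\<mu>, Seq (Seq (Assign 2 (Op tlo [Var 2])) (Assign 1 (Op suc [Var 1]))) (inner lt tlo suc))
        (True, \<mu>(2 := [], 1 := replicate (Suc n) one @ \<mu> 1))"
      using BSeq[OF b ih] eq by simp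
    then show "big_step one sem (\<mu>, inner lt tlo suc) (True, \<mu>(2 := [], 1 := replicate (Suc n) one @ \<mu> 1))"
      using BWhileT[OF g] unfolding inner_def by blast
  qed
qed

lemma outer_run:
  "\<forall>\<mu> m. \<mu> 3 = [] \<longrightarrow> length (\<mu> 0) = n \<longrightarrow> \<mu> 1 = replicate m one \<longrightarrow>
    (\<exists>\<mu>'. big_step one sem (\<mu>, outer lt tlo suc) (True, \<mu>') \<and> \<mu>' 1 = replicate (m * 2 ^ n) one)"
proof (induction n)
  case 0
  show ?case
  proof (intro allI impI)
    fix \<mu> :: "var \<Rightarrow> 'a list" and m assume h: "\<mu> 3 = []" "length (\<mu> 0) = 0" "\<mu> 1 = replicate m one"
    have "eval one sem \<mu> (Op lt [Var 3, Var 0]) \<noteq> [one]" using guard[of \<mu> 0, OF h(1)] h by simp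
    then have "big_step one sem (\<mu>, outer lt tlo suc) (True, \<mu>)" unfolding outer_def by (rule BWhileF)
    then show "\<exists>\<mu>'. big_step one sem (\<mu>, outer lt tlo suc) (True, \<mu>') \<and> \<mu>' 1 = replicate (m * 2 ^ 0) one"
      using h by auto
  qed
next
  case (Suc n)
  show ?case
  proof (intro allI impI)
    fix \<mu> :: "var \<Rightarrow> 'a list" and m assume h: "\<mu> 3 = []" "length (\<mu> 0) = Suc n" "\<mu> 1 = replicate m one"
    have g: "eval one sem \<mu> (Op lt [Var 3, Var 0]) = [one]" using guard[of \<mu> 0, OF h(1)] h by auto
    define \<mu>1 where "\<mu>1 = \<mu>(0 := tl (\<mu> 0))"
    define \<mu>2 where "\<mu>2 = \<mu>1(2 := \<mu>1 1)"
    define \<mu>3 where "\<mu>3 = \<mu>2(2 := [], 1 := replicate m one @ \<mu>2 1)"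
    have s1: "big_step one sem (\<mu>, Assign 0 (Op tlo [Var 0])) (True, \<mu>1)"
      using BAssign[of one sem \<mu> 0 "Op tlo [Var 0]"] tlo unfolding \<mu>1_def by simp
    have s2: "big_step one sem (\<mu>1, Assign 2 (Var 1)) (True, \<mu>2)"
      using BAssign[of one sem \<mu>1 2 "Var 1"] unfolding \<mu>2_def by simp
    have "\<mu>2 3 = []" "length (\<mu>2 2) = m" using h unfolding \<mu>2_def \<mu>1_def by auto
    then have s3: "big_step one sem (\<mu>2, inner lt tlo suc) (True, \<mu>3)"
      using inner_run unfolding \<mu>3_def by blast
    have body: "big_step one sem (\<mu>, Seq (Assign 0 (Op tlo [Var 0])) (Seq (Assign 2 (Var 1)) (inner lt tlo suc))) (True, \<mu>3)"
      by (rule BSeq[OF s1 BSeq[OF s2 s3]])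
    have "\<mu>3 3 = []" "length (\<mu>3 0) = n" "\<mu>3 1 = replicate (m + m) one"
      using h unfolding \<mu>3_def \<mu>2_def \<mu>1_def by (auto simp: replicate_add)
    then obtain \<mu>' where \<mu>': "big_step one sem (\<mu>3, outer lt tlo suc) (True, \<mu>')" "\<mu>' 1 = replicate ((m + m) * 2 ^ n) one"
      using Suc.IH by blast
    have "big_step one sem (\<mu>, Seq (Seq (Assign 0 (Op tlo [Var 0])) (Seq (Assign 2 (Var 1)) (inner lt tlo suc)))
      (While (Op lt [Var 3, Var 0]) (Seq (Assign 0 (Op tlo [Var 0])) (Seq (Assign 2 (Var 1)) (inner lt tlo suc))))) (True, \<mu>')"
      using BSeq[OF body \<mu>'(1)] unfolding outer_def .
    from BWhileT[OF g this] have "big_step one sem (\<mu>, outer lt tlo suc) (True, \<mu>')" unfolding outer_def .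
    moreover have "(m + m) * 2 ^ n = m * 2 ^ Suc n" by simp
    ultimately show "\<exists>\<mu>'. big_step one sem (\<mu>, outer lt tlo suc) (True, \<mu>') \<and> \<mu>' 1 = replicate (m * 2 ^ Suc n) one"
      using \<mu>'(2) by auto
  qed
qed

lemma expP_computes: "computes one sem (expP lt tlo suc) [w] (replicate (2 ^ length w) one)"
proof -
  define \<mu>0 where "\<mu>0 = init_store [0] [w]"
  have \<mu>0: "\<mu>0 = (\<lambda>_. [])(0 := w)" unfolding \<mu>0_def init_store_def by simp
  define \<mu>1 where "\<mu>1 = \<mu>0(1 := [one])"
  have s1: "big_step one sem (\<mu>0, Assign 1 (Op suc [Var 3])) (True, \<mu>1)"
    using BAssign[of one sem \<mu>0 1 "Op suc [Var 3]"] suc unfolding \<mu>1_def \<mu>0 by simp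
  have "\<mu>1 3 = []" "length (\<mu>1 0) = length w" "\<mu>1 1 = replicate 1 one" unfolding \<mu>1_def \<mu>0 by auto
  then obtain \<mu>' where \<mu>': "big_step one sem (\<mu>1, outer lt tlo suc) (True, \<mu>')" "\<mu>' 1 = replicate (1 * 2 ^ length w) one"
    using outer_run by blast
  have "big_step one sem (\<mu>0, body (expP lt tlo suc)) (True, \<mu>')"
    unfolding expP_def using BSeq[OF s1 \<mu>'(1)] by simp
  then show ?thesis unfolding computes_def using \<mu>'(2) \<mu>0_def by (auto simp: expP_def)
qed

lemma expP_TERM: "expP lt tlo suc \<in> TERM_progs one sem"
  unfolding TERM_progs_def
proof (intro CollectI allI impI)
  fix ws :: "'a list list" assume "length ws = length (params (expP lt tlo suc))"
  then obtain w where "ws = [w]" by (auto simp: expP_def length_Suc_conv)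
  then show "\<exists>w. computes one sem (expP lt tlo suc) ws w" using expP_computes by blast
qed

end


lemma part2:
  fixes zero one :: "'a::finite"
    and ar :: "'op \<Rightarrow> nat"
    and sem :: "'op \<Rightarrow> 'a list list \<Rightarrow> 'a list"
  assumes zo: "zero \<noteq> one"
    and std: "std_ops zero one ar sem"
  shows "\<exists>P \<in> TERM_progs one sem. \<forall>Q \<in> SAFE zero one ar sem \<inter> AP one sem. \<not> same_fun one sem Q P"
proof -
  obtain lt where lt: "\<forall>u v. sem lt [u, v] = bool_w zero one (length u < length v)"
    using std unfolding std_ops_def by blast
  obtain tlo where tlo: "\<forall>w. sem tlo [w] = tl w"
    using std unfolding std_ops_def by blast
  obtain suc where suc: "\<forall>w. sem suc [w] = one # w"
    using std unfolding std_ops_def by blast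
  interpret O: ops zero one sem lt tlo suc using zo lt tlo suc by unfold_locales
  let ?P = "expP lt tlo suc"
  have "\<not> same_fun one sem Q ?P" if Q: "Q \<in> SAFE zero one ar sem \<inter> AP one sem" for Q
  proof
    assume same: "same_fun one sem Q ?P"
    obtain \<Gamma> \<Delta> \<sigma> where safe: "safe_env zero one ar sem \<Delta>" and ty: "sty ar \<Gamma> \<Delta> 0 0 (body Q) \<sigma>"
      using Q unfolding SAFE_def by auto
    have ap: "\<not> (\<exists>\<mu> \<mu>' \<mu>'' e s. (tree_child one sem)\<^sup>*\<^sup>* (\<mu>, body Q) (\<mu>', While e s) \<and>
      (tree_child one sem)\<^sup>+\<^sup>+ (\<mu>', While e s) (\<mu>'', While e s) \<and> (\<forall>x \<in> U e. \<mu>' x = \<mu>'' x))"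
      using Q unfolding AP_def by blast
    interpret C: qctx zero one ar sem \<Gamma> \<Delta> "body Q" using safe ap by unfold_locales
    obtain f where f: "pm f" "\<And>\<mu> b \<mu>'. C.rch (\<mu>, body Q) \<Longrightarrow> big_step one sem (\<mu>, body Q) (b, \<mu>') \<Longrightarrow>
        C.L 0 \<mu>' \<le> f (C.L 0 \<mu>)"
      using C.ctop[OF ty] unfolding C.Ctop_def by blast
    obtain c k where ck: "\<forall>y. f y \<le> c * (y + 1) ^ k" using f(1) unfolding pm_def by blast
    have bound: "2 ^ n \<le> c * (n + 1) ^ k + n" for n
    proof -
      let ?ws = "[replicate n zero]"
      have "computes one sem ?P ?ws (replicate (2 ^ n) one)" using O.expP_computes[of "replicate n zero"] by simp
      then have "computes one sem Q ?ws (replicate (2 ^ n) one)" using same unfolding same_fun_def by blast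
      then obtain b \<mu>' where run: "big_step one sem (init_store (params Q) ?ws, body Q) (b, \<mu>')"
        and out: "\<mu>' (ret Q) = replicate (2 ^ n) one"
        unfolding computes_def by blast
      let ?\<mu>0 = "init_store (params Q) ?ws"
      have m0: "length (?\<mu>0 x) \<le> n" for x
        using init_store_mem[of "params Q" ?ws x] by auto
      have L0: "C.L 0 ?\<mu>0 \<le> n" by (rule Lv_le[OF C.finV]) (use m0 in blast)
      have "C.L 0 \<mu>' \<le> f (C.L 0 ?\<mu>0)" using f(2)[OF reach_init run] .
      also have "\<dots> \<le> f n" using pm_mono[OF f(1) L0] .
      also have "\<dots> \<le> c * (n + 1) ^ k" using ck by blast
      finally have Lb: "C.L 0 \<mu>' \<le> c * (n + 1) ^ k" .
      have "length (\<mu>' (ret Q)) \<le> c * (n + 1) ^ k + n"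
      proof (cases "ret Q \<in> svars (body Q)")
        case True
        then have "length (\<mu>' (ret Q)) \<le> C.L 0 \<mu>'" using Lv_ge[OF C.finV True, of 0 \<Gamma> \<mu>'] by simp
        then show ?thesis using Lb by linarith
      next
        case False
        then have "\<mu>' (ret Q) = ?\<mu>0 (ret Q)" using unchanged1[OF run] by simp
        then show ?thesis using m0[of "ret Q"] by simp
      qed
      then show ?thesis using out by simp
    qed
    obtain n where "c * (n + 1) ^ k + n < 2 ^ n" using poly_exp by blast
    then show False using bound[of n] by simp
  qed
  then show ?thesis using O.expP_TERM by blast
qed

theorem mainTheorem3:
  fixes zero one :: "'a::finite"
    and ar :: "'op \<Rightarrow> nat"
    and sem :: "'op \<Rightarrow> 'a list list \<Rightarrow> 'a list"
  assumes "zero \<noteq> one"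
    and "std_ops zero one ar sem"
  shows "SAFE zero one ar sem \<inter> AP one sem \<subseteq> TERM_progs one sem \<and>
         (\<exists>P \<in> TERM_progs one sem. \<forall>Q \<in> SAFE zero one ar sem \<inter> AP one sem. \<not> same_fun one sem Q P)"
  using part1[of _ zero one ar sem] part2[OF assms] by blast


end
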